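(* With the icosahedral setting of the context, for every $y_0\in\mathcal{I}$, every $u\in\mathbb{R}^3$ and every integer $n\ge1$, \[ \langle u,\nabla_\kappa\rangle q_{2n}(x;y_0)=2\langle u,y_0\rangle(6\kappa+n)\,q_{2n-1}(x;y_0), \] and for every integer $n\ge0$, \[ \langle u,\nabla_\kappa\rangle q_{2n+1}(x;y_0)=\langle u,y_0\rangle(10\kappa+2n+1)\,q_{2n}(x;y_0). \]
   Context: Let $\tau=(1+\sqrt5)/2$. Vectors in $\mathbb{R}^3$ are row vectors; $\langle x,y\rangle=\sum x_iy_i$. For $v\neq0$, $x\sigma_v=x-2\frac{\langle x,v\rangle}{|v|^2}v$. Let $R_+=\{(2,0,0),(0,2,0),(0,0,2),(\tau,\pm\tau^{-1},\pm1),(\pm1,\tau,\pm\tau^{-1}),(\tau^{-1},\pm1,\tau),(-\tau^{-1},1,\tau),(\tau^{-1},1,-\tau)\}$ (15 vectors, signs independent). For real $\kappa\ge0$ the Dunkl operators are $\mathcal{D}_if(x)=\partial_if(x)+\kappa\sum_{v\in R_+}\frac{f(x)-f(x\sigma_v)}{\langle x,v\rangle}v_i$ and $\langle u,\nabla_\kappa\rangle=\sum_iu_i\mathcal{D}_i$. Let $\mathcal{I}=\{(0,\pm\tau,\pm1),(\pm1,0,\pm\tau),(\pm\tau,\pm1,0)\}$. For $y_0\in\mathcal{I}$ the polynomials $q_n(x;y_0)$ (homogeneous of degree $n$ in $x$) are defined by the generating function $\left(1-r\langle x,y_0\rangle\right)^{-1}\prod_{y\in\mathcal{I}}\left(1-r\langle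 x,y\rangle\right)^{-\kappa}=\sum_{n\ge0}q_n(x;y_0)r^n$. *)

theory Defs
  imports "HOL-Analysis.Analysis"
begin

definition tau :: real where "tau = (1 + sqrt 5) / 2"

definition vec3 :: "real \<Rightarrow> real \<Rightarrow> real \<Rightarrow> real^3" where
  "vec3 a b c = vector [a, b, c]"

definition refl :: "real^3 \<Rightarrow> real^3 \<Rightarrow> real^3" where
  "refl v x = x - (2 * (x \<bullet> v) / (v \<bullet> v)) *\<^sub>R v"

definition sgns :: "real set" where "sgns = {1, -1}"

definition Rplus :: "(real^3) set" where
  "Rplus = {vec3 2 0 0, vec3 0 2 0, vec3 0 0 2}
     \<union> {vec3 tau (s * inverse tau) t | s t. s \<in> sgns \<and> t \<in> sgns}
     \<union> {vec3 s tau (t * inverse tau) | s t. s \<in> sgns \<and> t \<in> sgns}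
     \<union> {vec3 (inverse tau) s tau | s. s \<in> sgns}
     \<union> {vec3 (- inverse tau) 1 tau, vec3 (inverse tau) 1 (- tau)}"

definition Ico :: "(real^3) set" where
  "Ico = {vec3 0 (s * tau) t | s t. s \<in> sgns \<and> t \<in> sgns}
     \<union> {vec3 s 0 (t * tau) | s t. s \<in> sgns \<and> t \<in> sgns}
     \<union> {vec3 (s * tau) t 0 | s t. s \<in> sgns \<and> t \<in> sgns}"

definition partial :: "3 \<Rightarrow> (real^3 \<Rightarrow> real) \<Rightarrow> real^3 \<Rightarrow> real" where
  "partial i f x = deriv (\<lambda>t. f (x + t *\<^sub>R axis i 1)) 0"

definition dunkl :: "real \<Rightarrow> 3 \<Rightarrow> (real^3 \<Rightarrow> real) \<Rightarrow> real^3 \<Rightarrow> real" where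
  "dunkl k i f x = partial i f x
     + k * (\<Sum>v\<in>Rplus. (f x - f (refl v x)) / (x \<bullet> v) * (v $ i))"

definition dunkl_dir :: "real \<Rightarrow> real^3 \<Rightarrow> (real^3 \<Rightarrow> real) \<Rightarrow> real^3 \<Rightarrow> real" where
  "dunkl_dir k u f x = (\<Sum>i\<in>UNIV. (u $ i) * dunkl k i f x)"

definition genfun :: "real \<Rightarrow> real^3 \<Rightarrow> real^3 \<Rightarrow> real \<Rightarrow> real" where
  "genfun k y0 x r = inverse (1 - r * (x \<bullet> y0))
      * (\<Prod>y\<in>Ico. (1 - r * (x \<bullet> y)) powr (- k))"

text \<open>q_n(x;y0) = coefficient of r^n, i.e. n-th Taylor coefficient at r = 0.\<close>
definition q :: "real \<Rightarrow> nat \<Rightarrow> real^3 \<Rightarrow> real^3 \<Rightarrow> real" where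
  "q k n y0 x = (deriv ^^ n) (genfun k y0 x) 0 / fact n"

end

theory Submission
  imports Defs "HOL-Analysis.FPS_Convergence"
begin


definition Ek :: "real \<Rightarrow> real \<Rightarrow> real fps" where
  "Ek a c = Abs_fps (\<lambda>n. pochhammer a n / fact n * c ^ n)"

lemma Ek_nth: "fps_nth (Ek a c) n = pochhammer a n / fact n * c ^ n"
  by (simp add: Ek_def)

lemma fps_expansion_cong:
  fixes f g :: "real \<Rightarrow> real"
  assumes "f has_fps_expansion F" "eventually (\<lambda>z. f z = g z) (nhds 0)"
  shows "g has_fps_expansion F"
  using assms unfolding has_fps_expansion_def
  by (auto elim: eventually_elim2)

lemma binom_expansion:
  "(\<lambda>r::real. (1 - r * c) powr (- a)) has_fps_expansion Ek a c"
proof -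
  define z0 where "z0 = 1 / (\<bar>c\<bar> + 1)"
  have z0: "z0 > 0" "\<bar>z0 * c\<bar> < 1"
    by (auto simp: z0_def abs_mult field_simps)
  have nth: "fps_nth (Ek a c) n * z ^ n = ((- a) gchoose n) * (- z * c) ^ n" for z n
  proof -
    have e: "(- z * c) ^ n = (-1)^n * (z^n * c^n)"
      by (metis mult.assoc mult_minus1 power_mult_distrib)
    have "((-1::real)^n) * (-1)^n = 1"
      by (metis power_minus1_even power_mult_distrib mult_minus1 minus_minus power_one mult.commute)
    then show ?thesis unfolding e by (simp add: Ek_nth gbinomial_pochhammer field_simps)
  qed
  have sm: "(\<lambda>n. fps_nth (Ek a c) n * z ^ n) sums (1 - z * c) powr (- a)" if "\<bar>z * c\<bar> < 1" for z
  proof -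
    have "\<bar>- z * c\<bar> < 1" using that by simp
    from gen_binomial_real[OF this, of "-a"] show ?thesis by (simp add: nth)
  qed
  have "fps_conv_radius (Ek a c) \<ge> ereal (norm z0)"
    unfolding fps_conv_radius_def
    using sm[OF z0(2)] by (intro conv_radius_geI) (auto simp: sums_iff)
  hence rad: "fps_conv_radius (Ek a c) > 0" using z0
    by (metis ereal_less(2) less_le_trans norm_of_real real_norm_def abs_of_pos)
  have op: "open {z::real. \<bar>z * c\<bar> < 1}"
    by (intro open_Collect_less continuous_intros)
  have ev: "eventually (\<lambda>z::real. \<bar>z * c\<bar> < 1) (nhds 0)"
    using eventually_nhds_in_open[OF op] by simp
  show ?thesis unfolding has_fps_expansion_def
    using rad ev by (auto simp: eval_fps_def intro!: sums_unique[symmetric] sm elim!: eventually_mono)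
qed

lemma geom_expansion:
  "(\<lambda>r::real. inverse (1 - r * c)) has_fps_expansion Ek 1 c"
proof (rule fps_expansion_cong[OF binom_expansion[of c 1]])
  have op: "open {z::real. \<bar>z * c\<bar> < 1}"
    by (intro open_Collect_less continuous_intros)
  have ev: "eventually (\<lambda>z::real. \<bar>z * c\<bar> < 1) (nhds 0)"
    using eventually_nhds_in_open[OF op] by simp
  show "\<forall>\<^sub>F z in nhds 0. (1 - z * c) powr - 1 = inverse (1 - z * c)"
    using ev
  proof eventually_elim
    case (elim z)
    hence "1 - z * c > 0" by (simp add: abs_less_iff)
    thus ?case by (simp add: powr_minus)
  qed
qed

lemma iter_fps_deriv: "(fps_deriv ^^ n) F = fps_nth_deriv n F"
  by (induction n) (simp_all add: fps_nth_deriv_commute[symmetric])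

lemma fps_nth_expansion_real:
  fixes f :: "real \<Rightarrow> real"
  assumes "f has_fps_expansion F"
  shows "fps_nth F n = (deriv ^^ n) f 0 / fact n"
proof -
  have "(deriv ^^ n) f has_fps_expansion (fps_deriv ^^ n) F"
    by (induction n) (simp_all add: assms has_fps_expansion_deriv)
  hence "eventually (\<lambda>z. eval_fps ((fps_deriv ^^ n) F) z = (deriv ^^ n) f z) (nhds 0)"
    by (simp add: has_fps_expansion_def)
  hence "eval_fps ((fps_deriv ^^ n) F) 0 = (deriv ^^ n) f 0"
    by (rule eventually_nhds_x_imp_x)
  hence "fact n * fps_nth F n = (deriv ^^ n) f 0"
    by (simp add: eval_fps_at_0 iter_fps_deriv fps_deriv_maclauren_0)
  thus ?thesis by (simp add: field_simps)
qed

definition FF :: "real \<Rightarrow> real^3 \<Rightarrow> real^3 \<Rightarrow> real fps" where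
  "FF k y0 x = Ek 1 (x \<bullet> y0) * (\<Prod>y\<in>Ico. Ek k (x \<bullet> y))"

lemma genfun_expansion: "genfun k y0 x has_fps_expansion FF k y0 x"
  unfolding genfun_def[abs_def] FF_def
  by (intro has_fps_expansion_mult has_fps_expansion_prod geom_expansion binom_expansion)

lemma q_eq: "q k n y0 = (\<lambda>x. fps_nth (FF k y0 x) n)"
  by (rule ext) (simp add: q_def fps_nth_expansion_real[OF genfun_expansion])



definition hasD :: "(real^3 \<Rightarrow> real fps) \<Rightarrow> real fps \<Rightarrow> real^3 \<Rightarrow> real^3 \<Rightarrow> bool" where
  "hasD A A' x w \<longleftrightarrow> (\<forall>n. ((\<lambda>t. fps_nth (A (x + t *\<^sub>R w)) n) has_field_derivative fps_nth A' n) (at 0))"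

lemma hasD_const: "hasD (\<lambda>z. C) 0 x w"
  by (simp add: hasD_def)

lemma hasD_cong: "hasD A A' x w \<Longrightarrow> A' = B' \<Longrightarrow> hasD A B' x w"
  by simp

lemma hasD_mult:
  assumes "hasD A A' x w" "hasD B B' x w"
  shows "hasD (\<lambda>z. A z * B z) (A' * B x + A x * B') x w"
  unfolding hasD_def
proof
  fix n
  have "((\<lambda>t. \<Sum>i=0..n. fps_nth (A (x + t *\<^sub>R w)) i * fps_nth (B (x + t *\<^sub>R w)) (n - i))
        has_field_derivative (\<Sum>i=0..n. fps_nth A' i * fps_nth (B (x + 0 *\<^sub>R w)) (n - i)
            + fps_nth B' (n - i) * fps_nth (A (x + 0 *\<^sub>R w)) i)) (at 0)"
    using assms unfolding hasD_def by (intro DERIV_sum DERIV_mult) auto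
  also have "(\<Sum>i=0..n. fps_nth A' i * fps_nth (B (x + 0 *\<^sub>R w)) (n - i)
            + fps_nth B' (n - i) * fps_nth (A (x + 0 *\<^sub>R w)) i) = fps_nth (A' * B x + A x * B') n"
    unfolding fps_add_nth fps_mult_nth sum.distrib by (simp add: mult.commute[of "fps_nth B' _"])
  finally show "((\<lambda>t. fps_nth (A (x + t *\<^sub>R w) * B (x + t *\<^sub>R w)) n) has_field_derivative
      fps_nth (A' * B x + A x * B') n) (at 0)" by (simp add: fps_mult_nth)
qed

lemma hasD_prod:
  assumes "finite S" "\<And>y. y \<in> S \<Longrightarrow> hasD (A y) (A' y) x w"
  shows "hasD (\<lambda>z. \<Prod>y\<in>S. A y z) (\<Sum>y\<in>S. A' y * (\<Prod>y'\<in>S-{y}. A y' x)) x w"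
  using assms
proof (induction S rule: finite_induct)
  case empty
  then show ?case using hasD_const[of 1 x w] by simp
next
  case (insert a S)
  have h: "hasD (\<lambda>z. A a z * (\<Prod>y\<in>S. A y z))
      (A' a * (\<Prod>y\<in>S. A y x) + A a x * (\<Sum>y\<in>S. A' y * (\<Prod>y'\<in>S-{y}. A y' x))) x w"
    using insert by (intro hasD_mult) auto
  have e1: "insert a S - {a} = S" using insert by auto
  have e2: "(\<Prod>y'\<in>insert a S - {y}. A y' x) = A a x * (\<Prod>y'\<in>S-{y}. A y' x)" if "y \<in> S" for y
  proof -
    have "insert a S - {y} = insert a (S - {y})" using that insert by auto
    thus ?thesis using insert by simp
  qed
  have "(\<Sum>y\<in>insert a S. A' y * (\<Prod>y'\<in>insert a S-{y}. A y' x))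
      = A' a * (\<Prod>y\<in>S. A y x) + A a x * (\<Sum>y\<in>S. A' y * (\<Prod>y'\<in>S-{y}. A y' x))"
    using insert by (simp add: e1 e2 sum_distrib_left mult.left_commute cong: sum.cong)
  with h insert show ?case by simp
qed

lemma hasD_Ek:
  "hasD (\<lambda>z. Ek a (z \<bullet> y)) (fps_const (a * (w \<bullet> y)) * fps_X * Ek (a + 1) (x \<bullet> y)) x w"
  unfolding hasD_def
proof
  fix n
  have d: "((\<lambda>t. pochhammer a n / fact n * (x \<bullet> y + t * (w \<bullet> y)) ^ n) has_field_derivative
     pochhammer a n / fact n * (of_nat n * (x \<bullet> y + 0 * (w \<bullet> y)) ^ (n - 1) * (w \<bullet> y))) (at 0)"
    by (auto intro!: derivative_eq_intros)
  have e: "pochhammer a n / fact n * (of_nat n * (x \<bullet> y) ^ (n - 1) * (w \<bullet> y))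
     = fps_nth (fps_const (a * (w \<bullet> y)) * fps_X * Ek (a + 1) (x \<bullet> y)) n"
  proof (cases n)
    case 0 then show ?thesis by simp
  next
    case (Suc m)
    then show ?thesis
      by (simp add: Ek_nth pochhammer_rec fps_mult_fps_X_commute[symmetric] mult.assoc del: of_nat_Suc)
  qed
  show "((\<lambda>t. fps_nth (Ek a ((x + t *\<^sub>R w) \<bullet> y)) n) has_field_derivative
      fps_nth (fps_const (a * (w \<bullet> y)) * fps_X * Ek (a + 1) (x \<bullet> y)) n) (at 0)"
    using d unfolding e[symmetric] by (simp add: Ek_nth inner_add_left)
qed



definition Lf :: "real \<Rightarrow> real fps" where "Lf c = 1 - fps_const c * fps_X"

lemma mult_Lf_nth: "fps_nth (f * Lf c) n = fps_nth f n - c * (if n = 0 then 0 else fps_nth f (n - 1))"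
proof -
  have "f * Lf c = f - fps_const c * (fps_X * f)" by (simp add: Lf_def algebra_simps)
  thus ?thesis by simp
qed

lemma Ek1_nth: "fps_nth (Ek 1 c) n = c ^ n"
  by (simp add: Ek_nth pochhammer_fact[symmetric])

lemma Ek1_L: "Ek 1 c * Lf c = 1"
  by (rule fps_ext, subst mult_Lf_nth) (auto simp: Ek1_nth power_eq_if)

lemma Ek_aux: "(F::real) > 0 \<Longrightarrow> m + 1 > 0 \<Longrightarrow>
   (a + 1 + m) * p / ((m + 1) * F) * (c * d) - c * (p / F * d) = a * p / ((m + 1) * F) * (c * d)"
proof -
  assume h: "F > 0" "m + 1 > 0"
  have e1: "(a + 1 + m) * p / ((m + 1) * F) = a * p / ((m + 1) * F) + ((m + 1) * p) / ((m + 1) * F)"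
    by (simp add: add_divide_distrib[symmetric] algebra_simps)
  have e2: "((m + 1) * p) / ((m + 1) * F) = p / F" using h by simp
  show ?thesis unfolding e1 e2 by (simp add: algebra_simps)
qed

lemma Ek_succ_L: "Ek (a + 1) c * Lf c = Ek a c"
proof (rule fps_ext)
  fix n show "fps_nth (Ek (a + 1) c * Lf c) n = fps_nth (Ek a c) n"
  proof (cases n)
    case 0 then show ?thesis by (subst mult_Lf_nth) (simp add: Ek_nth)
  next
    case (Suc m)
    have "pochhammer (a + 1) (Suc m) = (a + 1 + of_nat m) * pochhammer (a + 1) m"
      by (rule pochhammer_rec')
    moreover have "pochhammer a (Suc m) = a * pochhammer (a + 1) m" by (rule pochhammer_rec)
    moreover have "fact (Suc m) = (real m + 1) * fact m" by (simp add: algebra_simps)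
    ultimately show ?thesis using Suc Ek_aux[of "fact m" "real m" a "pochhammer (a + 1) m" c "c ^ m"]
      apply (subst mult_Lf_nth)
      apply (simp only: Ek_nth power_Suc)
      apply simp
      done
  qed
qed

lemma Ek_succ: "Ek (a + 1) c = Ek a c * Ek 1 c"
proof -
  have "Ek (a + 1) c = Ek (a + 1) c * (Lf c * Ek 1 c)" using Ek1_L[of c] by (simp add: mult.commute)
  also have "\<dots> = Ek a c * Ek 1 c" using Ek_succ_L[of a c] by (simp add: mult.assoc[symmetric])
  finally show ?thesis .
qed

lemma XEk1: "fps_const c * fps_X * Ek 1 c = Ek 1 c - 1"
proof -
  have "Ek 1 c - fps_const c * fps_X * Ek 1 c = 1"
    using Ek1_L[of c] by (simp add: Lf_def algebra_simps)
  thus ?thesis by (simp add: algebra_simps)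
qed

lemma Ek1_pm: "2 * (Ek 1 c * Ek 1 (-c)) = Ek 1 c + Ek 1 (-c)"
proof -
  have s: "Lf c + Lf (-c) = 2" by (simp add: Lf_def)
  have "Ek 1 c + Ek 1 (-c) = Ek 1 c * Ek 1 (-c) * (Lf c + Lf (-c))"
    using Ek1_L[of c] Ek1_L[of "-c"] by (simp add: algebra_simps)
  thus ?thesis by (simp add: s mult.commute)
qed

definition Sc :: "real \<Rightarrow> real fps \<Rightarrow> real fps" where
  "Sc s F = Abs_fps (\<lambda>n. s ^ n * fps_nth F n)"

lemma Sc_nth: "fps_nth (Sc s F) n = s ^ n * fps_nth F n" by (simp add: Sc_def)

lemma Sc_mult: "Sc s (F * G) = Sc s F * Sc s G"
proof (rule fps_ext)
  fix n
  have "(\<Sum>i=0..n. s ^ n * (fps_nth F i * fps_nth G (n - i)))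
      = (\<Sum>i=0..n. s ^ i * fps_nth F i * (s ^ (n - i) * fps_nth G (n - i)))"
  proof (rule sum.cong)
    fix i assume "i \<in> {0..n}"
    hence "s ^ n = s ^ i * s ^ (n - i)" by (simp add: power_add[symmetric])
    thus "s ^ n * (fps_nth F i * fps_nth G (n - i)) = s ^ i * fps_nth F i * (s ^ (n - i) * fps_nth G (n - i))"
      by simp
  qed simp
  thus "fps_nth (Sc s (F * G)) n = fps_nth (Sc s F * Sc s G) n"
    by (simp add: Sc_nth fps_mult_nth sum_distrib_left)
qed

lemma Sc_1: "Sc s 1 = 1"
  by (rule fps_ext) (simp add: Sc_nth)

lemma Sc_prod: "Sc s (\<Prod>y\<in>S. F y) = (\<Prod>y\<in>S. Sc s (F y))"
  by (induction S rule: infinite_finite_induct) (simp_all add: Sc_1 Sc_mult)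

lemma Sc_Ek: "Sc s (Ek a c) = Ek a (s * c)"
  by (rule fps_ext) (simp add: Sc_nth Ek_nth power_mult_distrib)

lemma FF_scale: "FF k y0 (s *\<^sub>R x) = Sc s (FF k y0 x)"
  by (simp add: FF_def Sc_mult Sc_prod Sc_Ek)



lemma tau_sq: "tau * tau = tau + 1"
  unfolding tau_def by (simp add: field_simps)

lemma tau_pos: "tau > 0"
  unfolding tau_def by (simp add: add_pos_nonneg)

lemma inv_tau: "inverse tau = tau - 1"
proof -
  have "tau * (tau - 1) = 1" using tau_sq by (simp add: algebra_simps)
  thus ?thesis by (metis inverse_unique)
qed

lemma vec3_nth [simp]: "vec3 a b c $ 1 = a" "vec3 a b c $ 2 = b" "vec3 a b c $ 3 = c"
  by (simp_all add: vec3_def)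

lemma vec3_eq: "vec3 a b c = vec3 d e f \<longleftrightarrow> a = d \<and> b = e \<and> c = f"
  by (auto simp: vec_eq_iff forall_3)

lemma vec3_inner: "vec3 a b c \<bullet> vec3 d e f = a * d + b * e + c * f"
  by (simp add: inner_vec_def sum_3)

lemma vec3_diff: "vec3 a b c - s *\<^sub>R vec3 d e f = vec3 (a - s * d) (b - s * e) (c - s * f)"
  by (simp add: vec_eq_iff forall_3)

lemma vec3_neg: "- vec3 a b c = vec3 (- a) (- b) (- c)"
  by (simp add: vec_eq_iff forall_3)

definition icoL :: "(real^3) list" where "icoL = [vec3 0 tau 1, vec3 0 tau (-1), vec3 0 (-tau) 1, vec3 0 (-tau) (-1), vec3 1 0 tau, vec3 1 0 (-tau), vec3 (-1) 0 tau, vec3 (-1) 0 (-tau), vec3 tau 1 0, vec3 tau (-1) 0, vec3 (-tau) 1 0, vec3 (-tau) (-1) 0]"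
definition rpL :: "(real^3) list" where "rpL = [vec3 2 0 0, vec3 0 2 0, vec3 0 0 2, vec3 tau (inverse tau) 1, vec3 tau (inverse tau) (-1), vec3 tau (- inverse tau) 1, vec3 tau (- inverse tau) (-1), vec3 1 tau (inverse tau), vec3 1 tau (- inverse tau), vec3 (-1) tau (inverse tau), vec3 (-1) tau (- inverse tau), vec3 (inverse tau) 1 tau, vec3 (inverse tau) (-1) tau, vec3 (- inverse tau) 1 tau, vec3 (inverse tau) 1 (- tau)]"
definition ico :: "nat \<Rightarrow> real^3" where "ico i = icoL ! i"
definition rp :: "nat \<Rightarrow> real^3" where "rp j = rpL ! j"
definition Tt :: "nat list list" where "Tt = [[0, 1, 2, 3, 6, 7, 4, 5, 10, 11, 8, 9], [2, 3, 0, 1, 4, 5, 6, 7, 9, 8, 11, 10], [1, 0, 3, 2, 5, 4, 7, 6, 8, 9, 10, 11], [10, 1, 2, 9, 11, 5, 6, 8, 7, 3, 0, 4], [0, 10, 9, 3, 4, 11, 8, 7, 6, 2, 1, 5], [0, 8, 11, 3, 10, 5, 6, 9, 1, 7, 4, 2], [8, 1, 2, 11, 4, 10, 9, 7, 0, 6, 5, 3], [11, 7, 4, 8, 2, 5, 6, 1, 3, 9, 10, 0], [6, 11, 8, 5, 4, 3, 0, 7, 2, 9, 10, 1], [9, 5, 6, 10, 4, 1, 2, 7, 8, 0, 3, 11], [4, 9, 10, 7, 0, 5, 6, 3, 8, 1, 2, 11], [7, 1, 2, 4, 3, 8, 11, 0, 5, 9, 10, 6], [0, 4, 7, 3, 1,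 9, 10, 2, 8, 5, 6, 11], [5, 1, 2, 6, 9, 0, 3, 10, 8, 4, 7, 11], [0, 6, 5, 3, 8, 2, 1, 11, 4, 9, 10, 7]]"
definition negL :: "nat list" where "negL = [3, 2, 1, 0, 7, 6, 5, 4, 11, 10, 9, 8]"

lemma cases15: "(j::nat) < 15 \<Longrightarrow> j = 0 \<or> j = 1 \<or> j = 2 \<or> j = 3 \<or> j = 4 \<or> j = 5 \<or> j = 6 \<or> j = 7 \<or> j = 8 \<or> j = 9 \<or> j = 10 \<or> j = 11 \<or> j = 12 \<or> j = 13 \<or> j = 14"
  by arith

lemma cases12: "(j::nat) < 12 \<Longrightarrow> j = 0 \<or> j = 1 \<or> j = 2 \<or> j = 3 \<or> j = 4 \<or> j = 5 \<or> j = 6 \<or> j = 7 \<or> j = 8 \<or> j = 9 \<or> j = 10 \<or> j = 11"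
  by arith

lemma rp_norm_raw: "j < 15 \<Longrightarrow> rp j \<bullet> rp j = 4"
  using tau_sq
  apply (drule_tac cases15)
  apply (elim disjE)
  apply (simp_all add: rp_def rpL_def vec3_inner inv_tau algebra_simps tau_sq)
  done

lemma refl_rp: "j < 15 \<Longrightarrow> refl (rp j) x = x - ((x \<bullet> rp j) / 2) *\<^sub>R rp j"
  unfolding refl_def by (simp add: rp_norm_raw)

lemma tab_0_0: "refl (rp 0) (ico 0) = ico 0"
  using tau_sq by (subst refl_rp, simp) (simp add: rp_def ico_def icoL_def rpL_def vec3_inner vec_eq_iff forall_3 inv_tau; algebra?)
lemma tab_0_1: "refl (rp 0) (ico 1) = ico 1"
  using tau_sq by (subst refl_rp, simp) (simp add: rp_def ico_def icoL_def rpL_def vec3_inner vec_eq_iff forall_3 inv_tau; algebra?)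
lemma tab_0_2: "refl (rp 0) (ico 2) = ico 2"
  using tau_sq by (subst refl_rp, simp) (simp add: rp_def ico_def icoL_def rpL_def vec3_inner vec_eq_iff forall_3 inv_tau; algebra?)
lemma tab_0_3: "refl (rp 0) (ico 3) = ico 3"
  using tau_sq by (subst refl_rp, simp) (simp add: rp_def ico_def icoL_def rpL_def vec3_inner vec_eq_iff forall_3 inv_tau; algebra?)
lemma tab_0_4: "refl (rp 0) (ico 4) = ico 6"
  using tau_sq by (subst refl_rp, simp) (simp add: rp_def ico_def icoL_def rpL_def vec3_inner vec_eq_iff forall_3 inv_tau; algebra?)
lemma tab_0_5: "refl (rp 0) (ico 5) = ico 7"
  using tau_sq by (subst refl_rp, simp) (simp add: rp_def ico_def icoL_def rpL_def vec3_inner vec_eq_iff forall_3 inv_tau; algebra?)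
lemma tab_0_6: "refl (rp 0) (ico 6) = ico 4"
  using tau_sq by (subst refl_rp, simp) (simp add: rp_def ico_def icoL_def rpL_def vec3_inner vec_eq_iff forall_3 inv_tau; algebra?)
lemma tab_0_7: "refl (rp 0) (ico 7) = ico 5"
  using tau_sq by (subst refl_rp, simp) (simp add: rp_def ico_def icoL_def rpL_def vec3_inner vec_eq_iff forall_3 inv_tau; algebra?)
lemma tab_0_8: "refl (rp 0) (ico 8) = ico 10"
  using tau_sq by (subst refl_rp, simp) (simp add: rp_def ico_def icoL_def rpL_def vec3_inner vec_eq_iff forall_3 inv_tau; algebra?)
lemma tab_0_9: "refl (rp 0) (ico 9) = ico 11"
  using tau_sq by (subst refl_rp, simp) (simp add: rp_def ico_def icoL_def rpL_def vec3_inner vec_eq_iff forall_3 inv_tau; algebra?)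
lemma tab_0_10: "refl (rp 0) (ico 10) = ico 8"
  using tau_sq by (subst refl_rp, simp) (simp add: rp_def ico_def icoL_def rpL_def vec3_inner vec_eq_iff forall_3 inv_tau; algebra?)
lemma tab_0_11: "refl (rp 0) (ico 11) = ico 9"
  using tau_sq by (subst refl_rp, simp) (simp add: rp_def ico_def icoL_def rpL_def vec3_inner vec_eq_iff forall_3 inv_tau; algebra?)
lemma tab_1_0: "refl (rp 1) (ico 0) = ico 2"
  using tau_sq by (subst refl_rp, simp) (simp add: rp_def ico_def icoL_def rpL_def vec3_inner vec_eq_iff forall_3 inv_tau; algebra?)
lemma tab_1_1: "refl (rp 1) (ico 1) = ico 3"
  using tau_sq by (subst refl_rp, simp) (simp add: rp_def ico_def icoL_def rpL_def vec3_inner vec_eq_iff forall_3 inv_tau; algebra?)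
lemma tab_1_2: "refl (rp 1) (ico 2) = ico 0"
  using tau_sq by (subst refl_rp, simp) (simp add: rp_def ico_def icoL_def rpL_def vec3_inner vec_eq_iff forall_3 inv_tau; algebra?)
lemma tab_1_3: "refl (rp 1) (ico 3) = ico 1"
  using tau_sq by (subst refl_rp, simp) (simp add: rp_def ico_def icoL_def rpL_def vec3_inner vec_eq_iff forall_3 inv_tau; algebra?)
lemma tab_1_4: "refl (rp 1) (ico 4) = ico 4"
  using tau_sq by (subst refl_rp, simp) (simp add: rp_def ico_def icoL_def rpL_def vec3_inner vec_eq_iff forall_3 inv_tau; algebra?)
lemma tab_1_5: "refl (rp 1) (ico 5) = ico 5"
  using tau_sq by (subst refl_rp, simp) (simp add: rp_def ico_def icoL_def rpL_def vec3_inner vec_eq_iff forall_3 inv_tau; algebra?)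
lemma tab_1_6: "refl (rp 1) (ico 6) = ico 6"
  using tau_sq by (subst refl_rp, simp) (simp add: rp_def ico_def icoL_def rpL_def vec3_inner vec_eq_iff forall_3 inv_tau; algebra?)
lemma tab_1_7: "refl (rp 1) (ico 7) = ico 7"
  using tau_sq by (subst refl_rp, simp) (simp add: rp_def ico_def icoL_def rpL_def vec3_inner vec_eq_iff forall_3 inv_tau; algebra?)
lemma tab_1_8: "refl (rp 1) (ico 8) = ico 9"
  using tau_sq by (subst refl_rp, simp) (simp add: rp_def ico_def icoL_def rpL_def vec3_inner vec_eq_iff forall_3 inv_tau; algebra?)
lemma tab_1_9: "refl (rp 1) (ico 9) = ico 8"
  using tau_sq by (subst refl_rp, simp) (simp add: rp_def ico_def icoL_def rpL_def vec3_inner vec_eq_iff forall_3 inv_tau; algebra?)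
lemma tab_1_10: "refl (rp 1) (ico 10) = ico 11"
  using tau_sq by (subst refl_rp, simp) (simp add: rp_def ico_def icoL_def rpL_def vec3_inner vec_eq_iff forall_3 inv_tau; algebra?)
lemma tab_1_11: "refl (rp 1) (ico 11) = ico 10"
  using tau_sq by (subst refl_rp, simp) (simp add: rp_def ico_def icoL_def rpL_def vec3_inner vec_eq_iff forall_3 inv_tau; algebra?)
lemma tab_2_0: "refl (rp 2) (ico 0) = ico 1"
  using tau_sq by (subst refl_rp, simp) (simp add: rp_def ico_def icoL_def rpL_def vec3_inner vec_eq_iff forall_3 inv_tau; algebra?)
lemma tab_2_1: "refl (rp 2) (ico 1) = ico 0"
  using tau_sq by (subst refl_rp, simp) (simp add: rp_def ico_def icoL_def rpL_def vec3_inner vec_eq_iff forall_3 inv_tau; algebra?)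
lemma tab_2_2: "refl (rp 2) (ico 2) = ico 3"
  using tau_sq by (subst refl_rp, simp) (simp add: rp_def ico_def icoL_def rpL_def vec3_inner vec_eq_iff forall_3 inv_tau; algebra?)
lemma tab_2_3: "refl (rp 2) (ico 3) = ico 2"
  using tau_sq by (subst refl_rp, simp) (simp add: rp_def ico_def icoL_def rpL_def vec3_inner vec_eq_iff forall_3 inv_tau; algebra?)
lemma tab_2_4: "refl (rp 2) (ico 4) = ico 5"
  using tau_sq by (subst refl_rp, simp) (simp add: rp_def ico_def icoL_def rpL_def vec3_inner vec_eq_iff forall_3 inv_tau; algebra?)
lemma tab_2_5: "refl (rp 2) (ico 5) = ico 4"
  using tau_sq by (subst refl_rp, simp) (simp add: rp_def ico_def icoL_def rpL_def vec3_inner vec_eq_iff forall_3 inv_tau; algebra?)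
lemma tab_2_6: "refl (rp 2) (ico 6) = ico 7"
  using tau_sq by (subst refl_rp, simp) (simp add: rp_def ico_def icoL_def rpL_def vec3_inner vec_eq_iff forall_3 inv_tau; algebra?)
lemma tab_2_7: "refl (rp 2) (ico 7) = ico 6"
  using tau_sq by (subst refl_rp, simp) (simp add: rp_def ico_def icoL_def rpL_def vec3_inner vec_eq_iff forall_3 inv_tau; algebra?)
lemma tab_2_8: "refl (rp 2) (ico 8) = ico 8"
  using tau_sq by (subst refl_rp, simp) (simp add: rp_def ico_def icoL_def rpL_def vec3_inner vec_eq_iff forall_3 inv_tau; algebra?)
lemma tab_2_9: "refl (rp 2) (ico 9) = ico 9"
  using tau_sq by (subst refl_rp, simp) (simp add: rp_def ico_def icoL_def rpL_def vec3_inner vec_eq_iff forall_3 inv_tau; algebra?)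
lemma tab_2_10: "refl (rp 2) (ico 10) = ico 10"
  using tau_sq by (subst refl_rp, simp) (simp add: rp_def ico_def icoL_def rpL_def vec3_inner vec_eq_iff forall_3 inv_tau; algebra?)
lemma tab_2_11: "refl (rp 2) (ico 11) = ico 11"
  using tau_sq by (subst refl_rp, simp) (simp add: rp_def ico_def icoL_def rpL_def vec3_inner vec_eq_iff forall_3 inv_tau; algebra?)
lemma tab_3_0: "refl (rp 3) (ico 0) = ico 10"
  using tau_sq by (subst refl_rp, simp) (simp add: rp_def ico_def icoL_def rpL_def vec3_inner vec_eq_iff forall_3 inv_tau; algebra?)
lemma tab_3_1: "refl (rp 3) (ico 1) = ico 1"
  using tau_sq by (subst refl_rp, simp) (simp add: rp_def ico_def icoL_def rpL_def vec3_inner vec_eq_iff forall_3 inv_tau; algebra?)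
lemma tab_3_2: "refl (rp 3) (ico 2) = ico 2"
  using tau_sq by (subst refl_rp, simp) (simp add: rp_def ico_def icoL_def rpL_def vec3_inner vec_eq_iff forall_3 inv_tau; algebra?)
lemma tab_3_3: "refl (rp 3) (ico 3) = ico 9"
  using tau_sq by (subst refl_rp, simp) (simp add: rp_def ico_def icoL_def rpL_def vec3_inner vec_eq_iff forall_3 inv_tau; algebra?)
lemma tab_3_4: "refl (rp 3) (ico 4) = ico 11"
  using tau_sq by (subst refl_rp, simp) (simp add: rp_def ico_def icoL_def rpL_def vec3_inner vec_eq_iff forall_3 inv_tau; algebra?)
lemma tab_3_5: "refl (rp 3) (ico 5) = ico 5"
  using tau_sq by (subst refl_rp, simp) (simp add: rp_def ico_def icoL_def rpL_def vec3_inner vec_eq_iff forall_3 inv_tau; algebra?)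
lemma tab_3_6: "refl (rp 3) (ico 6) = ico 6"
  using tau_sq by (subst refl_rp, simp) (simp add: rp_def ico_def icoL_def rpL_def vec3_inner vec_eq_iff forall_3 inv_tau; algebra?)
lemma tab_3_7: "refl (rp 3) (ico 7) = ico 8"
  using tau_sq by (subst refl_rp, simp) (simp add: rp_def ico_def icoL_def rpL_def vec3_inner vec_eq_iff forall_3 inv_tau; algebra?)
lemma tab_3_8: "refl (rp 3) (ico 8) = ico 7"
  using tau_sq by (subst refl_rp, simp) (simp add: rp_def ico_def icoL_def rpL_def vec3_inner vec_eq_iff forall_3 inv_tau; algebra?)
lemma tab_3_9: "refl (rp 3) (ico 9) = ico 3"
  using tau_sq by (subst refl_rp, simp) (simp add: rp_def ico_def icoL_def rpL_def vec3_inner vec_eq_iff forall_3 inv_tau; algebra?)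
lemma tab_3_10: "refl (rp 3) (ico 10) = ico 0"
  using tau_sq by (subst refl_rp, simp) (simp add: rp_def ico_def icoL_def rpL_def vec3_inner vec_eq_iff forall_3 inv_tau; algebra?)
lemma tab_3_11: "refl (rp 3) (ico 11) = ico 4"
  using tau_sq by (subst refl_rp, simp) (simp add: rp_def ico_def icoL_def rpL_def vec3_inner vec_eq_iff forall_3 inv_tau; algebra?)
lemma tab_4_0: "refl (rp 4) (ico 0) = ico 0"
  using tau_sq by (subst refl_rp, simp) (simp add: rp_def ico_def icoL_def rpL_def vec3_inner vec_eq_iff forall_3 inv_tau; algebra?)
lemma tab_4_1: "refl (rp 4) (ico 1) = ico 10"
  using tau_sq by (subst refl_rp, simp) (simp add: rp_def ico_def icoL_def rpL_def vec3_inner vec_eq_iff forall_3 inv_tau; algebra?)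
lemma tab_4_2: "refl (rp 4) (ico 2) = ico 9"
  using tau_sq by (subst refl_rp, simp) (simp add: rp_def ico_def icoL_def rpL_def vec3_inner vec_eq_iff forall_3 inv_tau; algebra?)
lemma tab_4_3: "refl (rp 4) (ico 3) = ico 3"
  using tau_sq by (subst refl_rp, simp) (simp add: rp_def ico_def icoL_def rpL_def vec3_inner vec_eq_iff forall_3 inv_tau; algebra?)
lemma tab_4_4: "refl (rp 4) (ico 4) = ico 4"
  using tau_sq by (subst refl_rp, simp) (simp add: rp_def ico_def icoL_def rpL_def vec3_inner vec_eq_iff forall_3 inv_tau; algebra?)
lemma tab_4_5: "refl (rp 4) (ico 5) = ico 11"
  using tau_sq by (subst refl_rp, simp) (simp add: rp_def ico_def icoL_def rpL_def vec3_inner vec_eq_iff forall_3 inv_tau; algebra?)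
lemma tab_4_6: "refl (rp 4) (ico 6) = ico 8"
  using tau_sq by (subst refl_rp, simp) (simp add: rp_def ico_def icoL_def rpL_def vec3_inner vec_eq_iff forall_3 inv_tau; algebra?)
lemma tab_4_7: "refl (rp 4) (ico 7) = ico 7"
  using tau_sq by (subst refl_rp, simp) (simp add: rp_def ico_def icoL_def rpL_def vec3_inner vec_eq_iff forall_3 inv_tau; algebra?)
lemma tab_4_8: "refl (rp 4) (ico 8) = ico 6"
  using tau_sq by (subst refl_rp, simp) (simp add: rp_def ico_def icoL_def rpL_def vec3_inner vec_eq_iff forall_3 inv_tau; algebra?)
lemma tab_4_9: "refl (rp 4) (ico 9) = ico 2"
  using tau_sq by (subst refl_rp, simp) (simp add: rp_def ico_def icoL_def rpL_def vec3_inner vec_eq_iff forall_3 inv_tau; algebra?)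
lemma tab_4_10: "refl (rp 4) (ico 10) = ico 1"
  using tau_sq by (subst refl_rp, simp) (simp add: rp_def ico_def icoL_def rpL_def vec3_inner vec_eq_iff forall_3 inv_tau; algebra?)
lemma tab_4_11: "refl (rp 4) (ico 11) = ico 5"
  using tau_sq by (subst refl_rp, simp) (simp add: rp_def ico_def icoL_def rpL_def vec3_inner vec_eq_iff forall_3 inv_tau; algebra?)
lemma tab_5_0: "refl (rp 5) (ico 0) = ico 0"
  using tau_sq by (subst refl_rp, simp) (simp add: rp_def ico_def icoL_def rpL_def vec3_inner vec_eq_iff forall_3 inv_tau; algebra?)
lemma tab_5_1: "refl (rp 5) (ico 1) = ico 8"
  using tau_sq by (subst refl_rp, simp) (simp add: rp_def ico_def icoL_def rpL_def vec3_inner vec_eq_iff forall_3 inv_tau; algebra?)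
lemma tab_5_2: "refl (rp 5) (ico 2) = ico 11"
  using tau_sq by (subst refl_rp, simp) (simp add: rp_def ico_def icoL_def rpL_def vec3_inner vec_eq_iff forall_3 inv_tau; algebra?)
lemma tab_5_3: "refl (rp 5) (ico 3) = ico 3"
  using tau_sq by (subst refl_rp, simp) (simp add: rp_def ico_def icoL_def rpL_def vec3_inner vec_eq_iff forall_3 inv_tau; algebra?)
lemma tab_5_4: "refl (rp 5) (ico 4) = ico 10"
  using tau_sq by (subst refl_rp, simp) (simp add: rp_def ico_def icoL_def rpL_def vec3_inner vec_eq_iff forall_3 inv_tau; algebra?)
lemma tab_5_5: "refl (rp 5) (ico 5) = ico 5"
  using tau_sq by (subst refl_rp, simp) (simp add: rp_def ico_def icoL_def rpL_def vec3_inner vec_eq_iff forall_3 inv_tau; algebra?)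
lemma tab_5_6: "refl (rp 5) (ico 6) = ico 6"
  using tau_sq by (subst refl_rp, simp) (simp add: rp_def ico_def icoL_def rpL_def vec3_inner vec_eq_iff forall_3 inv_tau; algebra?)
lemma tab_5_7: "refl (rp 5) (ico 7) = ico 9"
  using tau_sq by (subst refl_rp, simp) (simp add: rp_def ico_def icoL_def rpL_def vec3_inner vec_eq_iff forall_3 inv_tau; algebra?)
lemma tab_5_8: "refl (rp 5) (ico 8) = ico 1"
  using tau_sq by (subst refl_rp, simp) (simp add: rp_def ico_def icoL_def rpL_def vec3_inner vec_eq_iff forall_3 inv_tau; algebra?)
lemma tab_5_9: "refl (rp 5) (ico 9) = ico 7"
  using tau_sq by (subst refl_rp, simp) (simp add: rp_def ico_def icoL_def rpL_def vec3_inner vec_eq_iff forall_3 inv_tau; algebra?)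
lemma tab_5_10: "refl (rp 5) (ico 10) = ico 4"
  using tau_sq by (subst refl_rp, simp) (simp add: rp_def ico_def icoL_def rpL_def vec3_inner vec_eq_iff forall_3 inv_tau; algebra?)
lemma tab_5_11: "refl (rp 5) (ico 11) = ico 2"
  using tau_sq by (subst refl_rp, simp) (simp add: rp_def ico_def icoL_def rpL_def vec3_inner vec_eq_iff forall_3 inv_tau; algebra?)
lemma tab_6_0: "refl (rp 6) (ico 0) = ico 8"
  using tau_sq by (subst refl_rp, simp) (simp add: rp_def ico_def icoL_def rpL_def vec3_inner vec_eq_iff forall_3 inv_tau; algebra?)
lemma tab_6_1: "refl (rp 6) (ico 1) = ico 1"
  using tau_sq by (subst refl_rp, simp) (simp add: rp_def ico_def icoL_def rpL_def vec3_inner vec_eq_iff forall_3 inv_tau; algebra?)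
lemma tab_6_2: "refl (rp 6) (ico 2) = ico 2"
  using tau_sq by (subst refl_rp, simp) (simp add: rp_def ico_def icoL_def rpL_def vec3_inner vec_eq_iff forall_3 inv_tau; algebra?)
lemma tab_6_3: "refl (rp 6) (ico 3) = ico 11"
  using tau_sq by (subst refl_rp, simp) (simp add: rp_def ico_def icoL_def rpL_def vec3_inner vec_eq_iff forall_3 inv_tau; algebra?)
lemma tab_6_4: "refl (rp 6) (ico 4) = ico 4"
  using tau_sq by (subst refl_rp, simp) (simp add: rp_def ico_def icoL_def rpL_def vec3_inner vec_eq_iff forall_3 inv_tau; algebra?)
lemma tab_6_5: "refl (rp 6) (ico 5) = ico 10"
  using tau_sq by (subst refl_rp, simp) (simp add: rp_def ico_def icoL_def rpL_def vec3_inner vec_eq_iff forall_3 inv_tau; algebra?)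
lemma tab_6_6: "refl (rp 6) (ico 6) = ico 9"
  using tau_sq by (subst refl_rp, simp) (simp add: rp_def ico_def icoL_def rpL_def vec3_inner vec_eq_iff forall_3 inv_tau; algebra?)
lemma tab_6_7: "refl (rp 6) (ico 7) = ico 7"
  using tau_sq by (subst refl_rp, simp) (simp add: rp_def ico_def icoL_def rpL_def vec3_inner vec_eq_iff forall_3 inv_tau; algebra?)
lemma tab_6_8: "refl (rp 6) (ico 8) = ico 0"
  using tau_sq by (subst refl_rp, simp) (simp add: rp_def ico_def icoL_def rpL_def vec3_inner vec_eq_iff forall_3 inv_tau; algebra?)
lemma tab_6_9: "refl (rp 6) (ico 9) = ico 6"
  using tau_sq by (subst refl_rp, simp) (simp add: rp_def ico_def icoL_def rpL_def vec3_inner vec_eq_iff forall_3 inv_tau; algebra?)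
lemma tab_6_10: "refl (rp 6) (ico 10) = ico 5"
  using tau_sq by (subst refl_rp, simp) (simp add: rp_def ico_def icoL_def rpL_def vec3_inner vec_eq_iff forall_3 inv_tau; algebra?)
lemma tab_6_11: "refl (rp 6) (ico 11) = ico 3"
  using tau_sq by (subst refl_rp, simp) (simp add: rp_def ico_def icoL_def rpL_def vec3_inner vec_eq_iff forall_3 inv_tau; algebra?)
lemma tab_7_0: "refl (rp 7) (ico 0) = ico 11"
  using tau_sq by (subst refl_rp, simp) (simp add: rp_def ico_def icoL_def rpL_def vec3_inner vec_eq_iff forall_3 inv_tau; algebra?)
lemma tab_7_1: "refl (rp 7) (ico 1) = ico 7"
  using tau_sq by (subst refl_rp, simp) (simp add: rp_def ico_def icoL_def rpL_def vec3_inner vec_eq_iff forall_3 inv_tau; algebra?)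
lemma tab_7_2: "refl (rp 7) (ico 2) = ico 4"
  using tau_sq by (subst refl_rp, simp) (simp add: rp_def ico_def icoL_def rpL_def vec3_inner vec_eq_iff forall_3 inv_tau; algebra?)
lemma tab_7_3: "refl (rp 7) (ico 3) = ico 8"
  using tau_sq by (subst refl_rp, simp) (simp add: rp_def ico_def icoL_def rpL_def vec3_inner vec_eq_iff forall_3 inv_tau; algebra?)
lemma tab_7_4: "refl (rp 7) (ico 4) = ico 2"
  using tau_sq by (subst refl_rp, simp) (simp add: rp_def ico_def icoL_def rpL_def vec3_inner vec_eq_iff forall_3 inv_tau; algebra?)
lemma tab_7_5: "refl (rp 7) (ico 5) = ico 5"
  using tau_sq by (subst refl_rp, simp) (simp add: rp_def ico_def icoL_def rpL_def vec3_inner vec_eq_iff forall_3 inv_tau; algebra?)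
lemma tab_7_6: "refl (rp 7) (ico 6) = ico 6"
  using tau_sq by (subst refl_rp, simp) (simp add: rp_def ico_def icoL_def rpL_def vec3_inner vec_eq_iff forall_3 inv_tau; algebra?)
lemma tab_7_7: "refl (rp 7) (ico 7) = ico 1"
  using tau_sq by (subst refl_rp, simp) (simp add: rp_def ico_def icoL_def rpL_def vec3_inner vec_eq_iff forall_3 inv_tau; algebra?)
lemma tab_7_8: "refl (rp 7) (ico 8) = ico 3"
  using tau_sq by (subst refl_rp, simp) (simp add: rp_def ico_def icoL_def rpL_def vec3_inner vec_eq_iff forall_3 inv_tau; algebra?)
lemma tab_7_9: "refl (rp 7) (ico 9) = ico 9"
  using tau_sq by (subst refl_rp, simp) (simp add: rp_def ico_def icoL_def rpL_def vec3_inner vec_eq_iff forall_3 inv_tau; algebra?)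
lemma tab_7_10: "refl (rp 7) (ico 10) = ico 10"
  using tau_sq by (subst refl_rp, simp) (simp add: rp_def ico_def icoL_def rpL_def vec3_inner vec_eq_iff forall_3 inv_tau; algebra?)
lemma tab_7_11: "refl (rp 7) (ico 11) = ico 0"
  using tau_sq by (subst refl_rp, simp) (simp add: rp_def ico_def icoL_def rpL_def vec3_inner vec_eq_iff forall_3 inv_tau; algebra?)
lemma tab_8_0: "refl (rp 8) (ico 0) = ico 6"
  using tau_sq by (subst refl_rp, simp) (simp add: rp_def ico_def icoL_def rpL_def vec3_inner vec_eq_iff forall_3 inv_tau; algebra?)
lemma tab_8_1: "refl (rp 8) (ico 1) = ico 11"
  using tau_sq by (subst refl_rp, simp) (simp add: rp_def ico_def icoL_def rpL_def vec3_inner vec_eq_iff forall_3 inv_tau; algebra?)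
lemma tab_8_2: "refl (rp 8) (ico 2) = ico 8"
  using tau_sq by (subst refl_rp, simp) (simp add: rp_def ico_def icoL_def rpL_def vec3_inner vec_eq_iff forall_3 inv_tau; algebra?)
lemma tab_8_3: "refl (rp 8) (ico 3) = ico 5"
  using tau_sq by (subst refl_rp, simp) (simp add: rp_def ico_def icoL_def rpL_def vec3_inner vec_eq_iff forall_3 inv_tau; algebra?)
lemma tab_8_4: "refl (rp 8) (ico 4) = ico 4"
  using tau_sq by (subst refl_rp, simp) (simp add: rp_def ico_def icoL_def rpL_def vec3_inner vec_eq_iff forall_3 inv_tau; algebra?)
lemma tab_8_5: "refl (rp 8) (ico 5) = ico 3"
  using tau_sq by (subst refl_rp, simp) (simp add: rp_def ico_def icoL_def rpL_def vec3_inner vec_eq_iff forall_3 inv_tau; algebra?)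
lemma tab_8_6: "refl (rp 8) (ico 6) = ico 0"
  using tau_sq by (subst refl_rp, simp) (simp add: rp_def ico_def icoL_def rpL_def vec3_inner vec_eq_iff forall_3 inv_tau; algebra?)
lemma tab_8_7: "refl (rp 8) (ico 7) = ico 7"
  using tau_sq by (subst refl_rp, simp) (simp add: rp_def ico_def icoL_def rpL_def vec3_inner vec_eq_iff forall_3 inv_tau; algebra?)
lemma tab_8_8: "refl (rp 8) (ico 8) = ico 2"
  using tau_sq by (subst refl_rp, simp) (simp add: rp_def ico_def icoL_def rpL_def vec3_inner vec_eq_iff forall_3 inv_tau; algebra?)
lemma tab_8_9: "refl (rp 8) (ico 9) = ico 9"
  using tau_sq by (subst refl_rp, simp) (simp add: rp_def ico_def icoL_def rpL_def vec3_inner vec_eq_iff forall_3 inv_tau; algebra?)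
lemma tab_8_10: "refl (rp 8) (ico 10) = ico 10"
  using tau_sq by (subst refl_rp, simp) (simp add: rp_def ico_def icoL_def rpL_def vec3_inner vec_eq_iff forall_3 inv_tau; algebra?)
lemma tab_8_11: "refl (rp 8) (ico 11) = ico 1"
  using tau_sq by (subst refl_rp, simp) (simp add: rp_def ico_def icoL_def rpL_def vec3_inner vec_eq_iff forall_3 inv_tau; algebra?)
lemma tab_9_0: "refl (rp 9) (ico 0) = ico 9"
  using tau_sq by (subst refl_rp, simp) (simp add: rp_def ico_def icoL_def rpL_def vec3_inner vec_eq_iff forall_3 inv_tau; algebra?)
lemma tab_9_1: "refl (rp 9) (ico 1) = ico 5"
  using tau_sq by (subst refl_rp, simp) (simp add: rp_def ico_def icoL_def rpL_def vec3_inner vec_eq_iff forall_3 inv_tau; algebra?)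
lemma tab_9_2: "refl (rp 9) (ico 2) = ico 6"
  using tau_sq by (subst refl_rp, simp) (simp add: rp_def ico_def icoL_def rpL_def vec3_inner vec_eq_iff forall_3 inv_tau; algebra?)
lemma tab_9_3: "refl (rp 9) (ico 3) = ico 10"
  using tau_sq by (subst refl_rp, simp) (simp add: rp_def ico_def icoL_def rpL_def vec3_inner vec_eq_iff forall_3 inv_tau; algebra?)
lemma tab_9_4: "refl (rp 9) (ico 4) = ico 4"
  using tau_sq by (subst refl_rp, simp) (simp add: rp_def ico_def icoL_def rpL_def vec3_inner vec_eq_iff forall_3 inv_tau; algebra?)
lemma tab_9_5: "refl (rp 9) (ico 5) = ico 1"
  using tau_sq by (subst refl_rp, simp) (simp add: rp_def ico_def icoL_def rpL_def vec3_inner vec_eq_iff forall_3 inv_tau; algebra?)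
lemma tab_9_6: "refl (rp 9) (ico 6) = ico 2"
  using tau_sq by (subst refl_rp, simp) (simp add: rp_def ico_def icoL_def rpL_def vec3_inner vec_eq_iff forall_3 inv_tau; algebra?)
lemma tab_9_7: "refl (rp 9) (ico 7) = ico 7"
  using tau_sq by (subst refl_rp, simp) (simp add: rp_def ico_def icoL_def rpL_def vec3_inner vec_eq_iff forall_3 inv_tau; algebra?)
lemma tab_9_8: "refl (rp 9) (ico 8) = ico 8"
  using tau_sq by (subst refl_rp, simp) (simp add: rp_def ico_def icoL_def rpL_def vec3_inner vec_eq_iff forall_3 inv_tau; algebra?)
lemma tab_9_9: "refl (rp 9) (ico 9) = ico 0"
  using tau_sq by (subst refl_rp, simp) (simp add: rp_def ico_def icoL_def rpL_def vec3_inner vec_eq_iff forall_3 inv_tau; algebra?)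
lemma tab_9_10: "refl (rp 9) (ico 10) = ico 3"
  using tau_sq by (subst refl_rp, simp) (simp add: rp_def ico_def icoL_def rpL_def vec3_inner vec_eq_iff forall_3 inv_tau; algebra?)
lemma tab_9_11: "refl (rp 9) (ico 11) = ico 11"
  using tau_sq by (subst refl_rp, simp) (simp add: rp_def ico_def icoL_def rpL_def vec3_inner vec_eq_iff forall_3 inv_tau; algebra?)
lemma tab_10_0: "refl (rp 10) (ico 0) = ico 4"
  using tau_sq by (subst refl_rp, simp) (simp add: rp_def ico_def icoL_def rpL_def vec3_inner vec_eq_iff forall_3 inv_tau; algebra?)
lemma tab_10_1: "refl (rp 10) (ico 1) = ico 9"
  using tau_sq by (subst refl_rp, simp) (simp add: rp_def ico_def icoL_def rpL_def vec3_inner vec_eq_iff forall_3 inv_tau; algebra?)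
lemma tab_10_2: "refl (rp 10) (ico 2) = ico 10"
  using tau_sq by (subst refl_rp, simp) (simp add: rp_def ico_def icoL_def rpL_def vec3_inner vec_eq_iff forall_3 inv_tau; algebra?)
lemma tab_10_3: "refl (rp 10) (ico 3) = ico 7"
  using tau_sq by (subst refl_rp, simp) (simp add: rp_def ico_def icoL_def rpL_def vec3_inner vec_eq_iff forall_3 inv_tau; algebra?)
lemma tab_10_4: "refl (rp 10) (ico 4) = ico 0"
  using tau_sq by (subst refl_rp, simp) (simp add: rp_def ico_def icoL_def rpL_def vec3_inner vec_eq_iff forall_3 inv_tau; algebra?)
lemma tab_10_5: "refl (rp 10) (ico 5) = ico 5"
  using tau_sq by (subst refl_rp, simp) (simp add: rp_def ico_def icoL_def rpL_def vec3_inner vec_eq_iff forall_3 inv_tau; algebra?)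
lemma tab_10_6: "refl (rp 10) (ico 6) = ico 6"
  using tau_sq by (subst refl_rp, simp) (simp add: rp_def ico_def icoL_def rpL_def vec3_inner vec_eq_iff forall_3 inv_tau; algebra?)
lemma tab_10_7: "refl (rp 10) (ico 7) = ico 3"
  using tau_sq by (subst refl_rp, simp) (simp add: rp_def ico_def icoL_def rpL_def vec3_inner vec_eq_iff forall_3 inv_tau; algebra?)
lemma tab_10_8: "refl (rp 10) (ico 8) = ico 8"
  using tau_sq by (subst refl_rp, simp) (simp add: rp_def ico_def icoL_def rpL_def vec3_inner vec_eq_iff forall_3 inv_tau; algebra?)
lemma tab_10_9: "refl (rp 10) (ico 9) = ico 1"
  using tau_sq by (subst refl_rp, simp) (simp add: rp_def ico_def icoL_def rpL_def vec3_inner vec_eq_iff forall_3 inv_tau; algebra?)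
lemma tab_10_10: "refl (rp 10) (ico 10) = ico 2"
  using tau_sq by (subst refl_rp, simp) (simp add: rp_def ico_def icoL_def rpL_def vec3_inner vec_eq_iff forall_3 inv_tau; algebra?)
lemma tab_10_11: "refl (rp 10) (ico 11) = ico 11"
  using tau_sq by (subst refl_rp, simp) (simp add: rp_def ico_def icoL_def rpL_def vec3_inner vec_eq_iff forall_3 inv_tau; algebra?)
lemma tab_11_0: "refl (rp 11) (ico 0) = ico 7"
  using tau_sq by (subst refl_rp, simp) (simp add: rp_def ico_def icoL_def rpL_def vec3_inner vec_eq_iff forall_3 inv_tau; algebra?)
lemma tab_11_1: "refl (rp 11) (ico 1) = ico 1"
  using tau_sq by (subst refl_rp, simp) (simp add: rp_def ico_def icoL_def rpL_def vec3_inner vec_eq_iff forall_3 inv_tau; algebra?)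
lemma tab_11_2: "refl (rp 11) (ico 2) = ico 2"
  using tau_sq by (subst refl_rp, simp) (simp add: rp_def ico_def icoL_def rpL_def vec3_inner vec_eq_iff forall_3 inv_tau; algebra?)
lemma tab_11_3: "refl (rp 11) (ico 3) = ico 4"
  using tau_sq by (subst refl_rp, simp) (simp add: rp_def ico_def icoL_def rpL_def vec3_inner vec_eq_iff forall_3 inv_tau; algebra?)
lemma tab_11_4: "refl (rp 11) (ico 4) = ico 3"
  using tau_sq by (subst refl_rp, simp) (simp add: rp_def ico_def icoL_def rpL_def vec3_inner vec_eq_iff forall_3 inv_tau; algebra?)
lemma tab_11_5: "refl (rp 11) (ico 5) = ico 8"
  using tau_sq by (subst refl_rp, simp) (simp add: rp_def ico_def icoL_def rpL_def vec3_inner vec_eq_iff forall_3 inv_tau; algebra?)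
lemma tab_11_6: "refl (rp 11) (ico 6) = ico 11"
  using tau_sq by (subst refl_rp, simp) (simp add: rp_def ico_def icoL_def rpL_def vec3_inner vec_eq_iff forall_3 inv_tau; algebra?)
lemma tab_11_7: "refl (rp 11) (ico 7) = ico 0"
  using tau_sq by (subst refl_rp, simp) (simp add: rp_def ico_def icoL_def rpL_def vec3_inner vec_eq_iff forall_3 inv_tau; algebra?)
lemma tab_11_8: "refl (rp 11) (ico 8) = ico 5"
  using tau_sq by (subst refl_rp, simp) (simp add: rp_def ico_def icoL_def rpL_def vec3_inner vec_eq_iff forall_3 inv_tau; algebra?)
lemma tab_11_9: "refl (rp 11) (ico 9) = ico 9"
  using tau_sq by (subst refl_rp, simp) (simp add: rp_def ico_def icoL_def rpL_def vec3_inner vec_eq_iff forall_3 inv_tau; algebra?)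
lemma tab_11_10: "refl (rp 11) (ico 10) = ico 10"
  using tau_sq by (subst refl_rp, simp) (simp add: rp_def ico_def icoL_def rpL_def vec3_inner vec_eq_iff forall_3 inv_tau; algebra?)
lemma tab_11_11: "refl (rp 11) (ico 11) = ico 6"
  using tau_sq by (subst refl_rp, simp) (simp add: rp_def ico_def icoL_def rpL_def vec3_inner vec_eq_iff forall_3 inv_tau; algebra?)
lemma tab_12_0: "refl (rp 12) (ico 0) = ico 0"
  using tau_sq by (subst refl_rp, simp) (simp add: rp_def ico_def icoL_def rpL_def vec3_inner vec_eq_iff forall_3 inv_tau; algebra?)
lemma tab_12_1: "refl (rp 12) (ico 1) = ico 4"
  using tau_sq by (subst refl_rp, simp) (simp add: rp_def ico_def icoL_def rpL_def vec3_inner vec_eq_iff forall_3 inv_tau; algebra?)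
lemma tab_12_2: "refl (rp 12) (ico 2) = ico 7"
  using tau_sq by (subst refl_rp, simp) (simp add: rp_def ico_def icoL_def rpL_def vec3_inner vec_eq_iff forall_3 inv_tau; algebra?)
lemma tab_12_3: "refl (rp 12) (ico 3) = ico 3"
  using tau_sq by (subst refl_rp, simp) (simp add: rp_def ico_def icoL_def rpL_def vec3_inner vec_eq_iff forall_3 inv_tau; algebra?)
lemma tab_12_4: "refl (rp 12) (ico 4) = ico 1"
  using tau_sq by (subst refl_rp, simp) (simp add: rp_def ico_def icoL_def rpL_def vec3_inner vec_eq_iff forall_3 inv_tau; algebra?)
lemma tab_12_5: "refl (rp 12) (ico 5) = ico 9"
  using tau_sq by (subst refl_rp, simp) (simp add: rp_def ico_def icoL_def rpL_def vec3_inner vec_eq_iff forall_3 inv_tau; algebra?)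
lemma tab_12_6: "refl (rp 12) (ico 6) = ico 10"
  using tau_sq by (subst refl_rp, simp) (simp add: rp_def ico_def icoL_def rpL_def vec3_inner vec_eq_iff forall_3 inv_tau; algebra?)
lemma tab_12_7: "refl (rp 12) (ico 7) = ico 2"
  using tau_sq by (subst refl_rp, simp) (simp add: rp_def ico_def icoL_def rpL_def vec3_inner vec_eq_iff forall_3 inv_tau; algebra?)
lemma tab_12_8: "refl (rp 12) (ico 8) = ico 8"
  using tau_sq by (subst refl_rp, simp) (simp add: rp_def ico_def icoL_def rpL_def vec3_inner vec_eq_iff forall_3 inv_tau; algebra?)
lemma tab_12_9: "refl (rp 12) (ico 9) = ico 5"
  using tau_sq by (subst refl_rp, simp) (simp add: rp_def ico_def icoL_def rpL_def vec3_inner vec_eq_iff forall_3 inv_tau; algebra?)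
lemma tab_12_10: "refl (rp 12) (ico 10) = ico 6"
  using tau_sq by (subst refl_rp, simp) (simp add: rp_def ico_def icoL_def rpL_def vec3_inner vec_eq_iff forall_3 inv_tau; algebra?)
lemma tab_12_11: "refl (rp 12) (ico 11) = ico 11"
  using tau_sq by (subst refl_rp, simp) (simp add: rp_def ico_def icoL_def rpL_def vec3_inner vec_eq_iff forall_3 inv_tau; algebra?)
lemma tab_13_0: "refl (rp 13) (ico 0) = ico 5"
  using tau_sq by (subst refl_rp, simp) (simp add: rp_def ico_def icoL_def rpL_def vec3_inner vec_eq_iff forall_3 inv_tau; algebra?)
lemma tab_13_1: "refl (rp 13) (ico 1) = ico 1"
  using tau_sq by (subst refl_rp, simp) (simp add: rp_def ico_def icoL_def rpL_def vec3_inner vec_eq_iff forall_3 inv_tau; algebra?)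
lemma tab_13_2: "refl (rp 13) (ico 2) = ico 2"
  using tau_sq by (subst refl_rp, simp) (simp add: rp_def ico_def icoL_def rpL_def vec3_inner vec_eq_iff forall_3 inv_tau; algebra?)
lemma tab_13_3: "refl (rp 13) (ico 3) = ico 6"
  using tau_sq by (subst refl_rp, simp) (simp add: rp_def ico_def icoL_def rpL_def vec3_inner vec_eq_iff forall_3 inv_tau; algebra?)
lemma tab_13_4: "refl (rp 13) (ico 4) = ico 9"
  using tau_sq by (subst refl_rp, simp) (simp add: rp_def ico_def icoL_def rpL_def vec3_inner vec_eq_iff forall_3 inv_tau; algebra?)
lemma tab_13_5: "refl (rp 13) (ico 5) = ico 0"
  using tau_sq by (subst refl_rp, simp) (simp add: rp_def ico_def icoL_def rpL_def vec3_inner vec_eq_iff forall_3 inv_tau; algebra?)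
lemma tab_13_6: "refl (rp 13) (ico 6) = ico 3"
  using tau_sq by (subst refl_rp, simp) (simp add: rp_def ico_def icoL_def rpL_def vec3_inner vec_eq_iff forall_3 inv_tau; algebra?)
lemma tab_13_7: "refl (rp 13) (ico 7) = ico 10"
  using tau_sq by (subst refl_rp, simp) (simp add: rp_def ico_def icoL_def rpL_def vec3_inner vec_eq_iff forall_3 inv_tau; algebra?)
lemma tab_13_8: "refl (rp 13) (ico 8) = ico 8"
  using tau_sq by (subst refl_rp, simp) (simp add: rp_def ico_def icoL_def rpL_def vec3_inner vec_eq_iff forall_3 inv_tau; algebra?)
lemma tab_13_9: "refl (rp 13) (ico 9) = ico 4"
  using tau_sq by (subst refl_rp, simp) (simp add: rp_def ico_def icoL_def rpL_def vec3_inner vec_eq_iff forall_3 inv_tau; algebra?)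
lemma tab_13_10: "refl (rp 13) (ico 10) = ico 7"
  using tau_sq by (subst refl_rp, simp) (simp add: rp_def ico_def icoL_def rpL_def vec3_inner vec_eq_iff forall_3 inv_tau; algebra?)
lemma tab_13_11: "refl (rp 13) (ico 11) = ico 11"
  using tau_sq by (subst refl_rp, simp) (simp add: rp_def ico_def icoL_def rpL_def vec3_inner vec_eq_iff forall_3 inv_tau; algebra?)
lemma tab_14_0: "refl (rp 14) (ico 0) = ico 0"
  using tau_sq by (subst refl_rp, simp) (simp add: rp_def ico_def icoL_def rpL_def vec3_inner vec_eq_iff forall_3 inv_tau; algebra?)
lemma tab_14_1: "refl (rp 14) (ico 1) = ico 6"
  using tau_sq by (subst refl_rp, simp) (simp add: rp_def ico_def icoL_def rpL_def vec3_inner vec_eq_iff forall_3 inv_tau; algebra?)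
lemma tab_14_2: "refl (rp 14) (ico 2) = ico 5"
  using tau_sq by (subst refl_rp, simp) (simp add: rp_def ico_def icoL_def rpL_def vec3_inner vec_eq_iff forall_3 inv_tau; algebra?)
lemma tab_14_3: "refl (rp 14) (ico 3) = ico 3"
  using tau_sq by (subst refl_rp, simp) (simp add: rp_def ico_def icoL_def rpL_def vec3_inner vec_eq_iff forall_3 inv_tau; algebra?)
lemma tab_14_4: "refl (rp 14) (ico 4) = ico 8"
  using tau_sq by (subst refl_rp, simp) (simp add: rp_def ico_def icoL_def rpL_def vec3_inner vec_eq_iff forall_3 inv_tau; algebra?)
lemma tab_14_5: "refl (rp 14) (ico 5) = ico 2"
  using tau_sq by (subst refl_rp, simp) (simp add: rp_def ico_def icoL_def rpL_def vec3_inner vec_eq_iff forall_3 inv_tau; algebra?)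
lemma tab_14_6: "refl (rp 14) (ico 6) = ico 1"
  using tau_sq by (subst refl_rp, simp) (simp add: rp_def ico_def icoL_def rpL_def vec3_inner vec_eq_iff forall_3 inv_tau; algebra?)
lemma tab_14_7: "refl (rp 14) (ico 7) = ico 11"
  using tau_sq by (subst refl_rp, simp) (simp add: rp_def ico_def icoL_def rpL_def vec3_inner vec_eq_iff forall_3 inv_tau; algebra?)
lemma tab_14_8: "refl (rp 14) (ico 8) = ico 4"
  using tau_sq by (subst refl_rp, simp) (simp add: rp_def ico_def icoL_def rpL_def vec3_inner vec_eq_iff forall_3 inv_tau; algebra?)
lemma tab_14_9: "refl (rp 14) (ico 9) = ico 9"
  using tau_sq by (subst refl_rp, simp) (simp add: rp_def ico_def icoL_def rpL_def vec3_inner vec_eq_iff forall_3 inv_tau; algebra?)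
lemma tab_14_10: "refl (rp 14) (ico 10) = ico 10"
  using tau_sq by (subst refl_rp, simp) (simp add: rp_def ico_def icoL_def rpL_def vec3_inner vec_eq_iff forall_3 inv_tau; algebra?)
lemma tab_14_11: "refl (rp 14) (ico 11) = ico 7"
  using tau_sq by (subst refl_rp, simp) (simp add: rp_def ico_def icoL_def rpL_def vec3_inner vec_eq_iff forall_3 inv_tau; algebra?)

lemmas tabs = tab_0_0 tab_0_1 tab_0_2 tab_0_3 tab_0_4 tab_0_5 tab_0_6 tab_0_7 tab_0_8 tab_0_9 tab_0_10 tab_0_11 tab_1_0 tab_1_1 tab_1_2 tab_1_3 tab_1_4 tab_1_5 tab_1_6 tab_1_7 tab_1_8 tab_1_9 tab_1_10 tab_1_11 tab_2_0 tab_2_1 tab_2_2 tab_2_3 tab_2_4 tab_2_5 tab_2_6 tab_2_7 tab_2_8 tab_2_9 tab_2_10 tab_2_11 tab_3_0 tab_3_1 tab_3_2 tab_3_3 tab_3_4 tab_3_5 tab_3_6 tab_3_7 tab_3_8 tab_3_9 tab_3_10 tab_3_11 tab_4_0 tab_4_1 tab_4_2 tab_4_3 tab_4_4 tab_4_5 tab_4_6 tab_4_7 tab_4_8 tab_4_9 tab_4_10 tab_4_11 tab_5_0 tab_5_1 tab_5_2 tab_5_3 tab_5_4 tab_5_5 tab_5_6 tab_5_7 tab_5_8 tab_5_9 tab_5_10 tab_5_11 tab_6_0 tab_6_1 tab_6_2 tab_6_3 tab_6_4 tab_6_5 tab_6_6 tab_6_7 tab_6_8 tab_6_9 tab_6_10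 tab_6_11 tab_7_0 tab_7_1 tab_7_2 tab_7_3 tab_7_4 tab_7_5 tab_7_6 tab_7_7 tab_7_8 tab_7_9 tab_7_10 tab_7_11 tab_8_0 tab_8_1 tab_8_2 tab_8_3 tab_8_4 tab_8_5 tab_8_6 tab_8_7 tab_8_8 tab_8_9 tab_8_10 tab_8_11 tab_9_0 tab_9_1 tab_9_2 tab_9_3 tab_9_4 tab_9_5 tab_9_6 tab_9_7 tab_9_8 tab_9_9 tab_9_10 tab_9_11 tab_10_0 tab_10_1 tab_10_2 tab_10_3 tab_10_4 tab_10_5 tab_10_6 tab_10_7 tab_10_8 tab_10_9 tab_10_10 tab_10_11 tab_11_0 tab_11_1 tab_11_2 tab_11_3 tab_11_4 tab_11_5 tab_11_6 tab_11_7 tab_11_8 tab_11_9 tab_11_10 tab_11_11 tab_12_0 tab_12_1 tab_12_2 tab_12_3 tab_12_4 tab_12_5 tab_12_6 tab_12_7 tab_12_8 tab_12_9 tab_12_10 tab_12_11 tab_13_0 tab_13_1 tab_13_2 tab_13_3 tab_13_4 tab_13_5 tab_13_6 tab_13_7 tab_13_8 tab_13_9 tab_13_10 tab_13_11 tab_14_0 tab_14_1 tab_14_2 tab_14_3 tab_14_4 tab_14_5 tab_14_6 tab_14_7 tab_14_8 tab_14_9 tab_14_10 tab_14_11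

lemma tab: "j < 15 \<Longrightarrow> i < 12 \<Longrightarrow> refl (rp j) (ico i) = ico (Tt ! j ! i)"
  apply (drule cases15, drule cases12)
  apply (elim disjE)
  apply (simp_all add: tabs tabs[unfolded One_nat_def] Tt_def)
  done

lemma Tt_bound: "j < 15 \<Longrightarrow> i < 12 \<Longrightarrow> Tt ! j ! i < 12"
  apply (drule cases15, drule cases12)
  apply (elim disjE)
  apply (simp_all add: Tt_def)
  done

lemma negL_bound: "i < 12 \<Longrightarrow> negL ! i < 12 \<and> negL ! i \<noteq> i"
  apply (drule cases12)
  apply (elim disjE)
  apply (simp_all add: negL_def)
  done

lemma negL_ico: "i < 12 \<Longrightarrow> ico (negL ! i) = - ico i"
  apply (drule cases12)
  apply (elim disjE)
  apply (simp_all add: negL_def ico_def icoL_def vec3_neg)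
  done

lemma unroll12: "(\<Prod>i<(12::nat). f i) = f 0 * f 1 * f 2 * f 3 * f 4 * f 5 * f 6 * f 7 * f 8 * f 9 * f 10 * f 11"
  by (simp add: lessThan_nat_numeral ac_simps)

lemma perm_Tt: "j < 15 \<Longrightarrow> (\<Prod>i<12. (f :: nat \<Rightarrow> 'a::comm_monoid_mult) (Tt ! j ! i)) = (\<Prod>i<12. f i)"
  apply (drule cases15)
  apply (elim disjE)
  apply (simp_all only: unroll12)
  apply (simp_all add: Tt_def mult_ac)
  done

lemma perm_negL: "(\<Prod>i<12. (f :: nat \<Rightarrow> 'a::comm_monoid_mult) (negL ! i)) = (\<Prod>i<12. f i)"
  by (simp only: unroll12) (simp add: negL_def mult_ac)

lemma unroll12s: "(\<Sum>i<(12::nat). f i) = f 0 + f 1 + f 2 + f 3 + f 4 + f 5 + f 6 + f 7 + f 8 + f 9 + f 10 + f 11"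
  by (simp add: lessThan_nat_numeral ac_simps)

lemma unroll15s: "(\<Sum>i<(15::nat). f i) = f 0 + f 1 + f 2 + f 3 + f 4 + f 5 + f 6 + f 7 + f 8 + f 9 + f 10 + f 11 + f 12 + f 13 + f 14"
  by (simp add: lessThan_nat_numeral ac_simps)

lemma orbit_idx:
  fixes phi :: "nat \<Rightarrow> real"
  assumes "i0 < 12" "phi i0 = 0"
  shows "(\<Sum>j<15. phi (Tt ! j ! i0)) = (\<Sum>i<12. if i = i0 \<or> i = negL ! i0 then 0 else phi i)"
  using assms
  apply (simp only: unroll12s unroll15s)
  apply (drule_tac cases12)
  apply (elim disjE)
  apply (simp_all add: Tt_def negL_def add_ac)
  done



lemma tau_bounds: "1.6 < tau" "tau < 1.7"
proof -
  have "2.2 < sqrt 5" by (rule real_less_rsqrt) (simp add: power2_eq_square)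
  moreover have "sqrt 5 < 2.4" by (rule real_less_lsqrt) (simp_all add: power2_eq_square)
  ultimately show "1.6 < tau" "tau < 1.7" unfolding tau_def by simp_all
qed

lemma compr4: "{f s t | s t. s \<in> {a, b} \<and> t \<in> {c, d}} = {f a c, f a d, f b c, f b d}"
  by blast

lemma compr2: "{f s | s. s \<in> {a, b}} = {f a, f b}"
  by blast

lemma Ico_set: "Ico = set icoL"
  unfolding Ico_def sgns_def compr4 by (simp add: icoL_def) blast

lemma Rplus_set: "Rplus = set rpL"
  unfolding Rplus_def sgns_def compr4 compr2 by (simp add: rpL_def) blast

lemma set_img: "set xs = (\<lambda>i. xs ! i) ` {..<length xs}"
  by (auto simp: in_set_conv_nth)

lemma icoL_img: "set icoL = ico ` {..<12}"
proof -
  have "length icoL = 12" by (simp add: icoL_def)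
  thus ?thesis using set_img[of icoL] by (simp add: ico_def[abs_def])
qed

lemma rpL_img: "set rpL = rp ` {..<15}"
proof -
  have "length rpL = 15" by (simp add: rpL_def)
  thus ?thesis using set_img[of rpL] by (simp add: rp_def[abs_def])
qed

lemma icoL_distinct: "distinct icoL"
  using tau_bounds by (simp add: icoL_def vec3_eq)

lemma rpL_distinct: "distinct rpL"
  using tau_bounds by (simp add: rpL_def vec3_eq inv_tau)



lemma len_icoL: "length icoL = 12" by (simp add: icoL_def)
lemma len_rpL: "length rpL = 15" by (simp add: rpL_def)

lemma inj_ico: "inj_on ico {..<12}"
  using icoL_distinct len_icoL by (auto simp: inj_on_def ico_def distinct_conv_nth)

lemma inj_rp: "inj_on rp {..<15}"
  using rpL_distinct len_rpL by (auto simp: inj_on_def rp_def distinct_conv_nth)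

lemma Ico_img: "Ico = ico ` {..<12}" by (simp add: Ico_set icoL_img)
lemma Rplus_img: "Rplus = rp ` {..<15}" by (simp add: Rplus_set rpL_img)

lemma sum_Ico: "(\<Sum>y\<in>Ico. h y) = (\<Sum>i<12. h (ico i))"
  by (simp add: Ico_img sum.reindex[OF inj_ico])

lemma prod_Ico: "(\<Prod>y\<in>Ico. h y) = (\<Prod>i<12. h (ico i))"
  by (simp add: Ico_img prod.reindex[OF inj_ico])

lemma sum_Rplus: "(\<Sum>v\<in>Rplus. h v) = (\<Sum>j<15. h (rp j))"
  by (simp add: Rplus_img sum.reindex[OF inj_rp])

lemma card_Ico: "card Ico = 12"
  by (simp add: Ico_img card_image[OF inj_ico])

lemma finite_Ico: "finite Ico" by (simp add: Ico_img)

lemma refl_inner: "refl v x \<bullet> y = x \<bullet> refl v y"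
proof -
  have 1: "refl v x \<bullet> y = x \<bullet> y - (2 * (x \<bullet> v) / (v \<bullet> v)) * (v \<bullet> y)"
    by (simp add: refl_def inner_diff_left)
  have 2: "x \<bullet> refl v y = x \<bullet> y - (2 * (y \<bullet> v) / (v \<bullet> v)) * (x \<bullet> v)"
    by (simp add: refl_def inner_diff_right)
  show ?thesis unfolding 1 2 by (simp add: inner_commute[of v y])
qed

lemma prod_refl_inv:
  assumes "j < 15"
  shows "(\<Prod>y\<in>Ico. (h :: real \<Rightarrow> 'a::comm_monoid_mult) (refl (rp j) x \<bullet> y)) = (\<Prod>y\<in>Ico. h (x \<bullet> y))"
proof -
  have "(\<Prod>y\<in>Ico. h (refl (rp j) x \<bullet> y)) = (\<Prod>i<12. h (x \<bullet> ico (Tt ! j ! i)))"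
    unfolding prod_Ico refl_inner using assms by (intro prod.cong) (auto simp: tab)
  also have "\<dots> = (\<Prod>i<12. h (x \<bullet> ico i))"
    using perm_Tt[OF assms, of "\<lambda>i. h (x \<bullet> ico i)"] by simp
  finally show ?thesis by (simp add: prod_Ico)
qed

lemma prod_neg_inv:
  "(\<Prod>y\<in>Ico. (h :: real \<Rightarrow> 'a::comm_monoid_mult) ((- x) \<bullet> y)) = (\<Prod>y\<in>Ico. h (x \<bullet> y))"
proof -
  have "(\<Prod>y\<in>Ico. h ((- x) \<bullet> y)) = (\<Prod>i<12. h (x \<bullet> ico (negL ! i)))"
    unfolding prod_Ico by (intro prod.cong) (auto simp: negL_ico)
  also have "\<dots> = (\<Prod>i<12. h (x \<bullet> ico i))"
    using perm_negL[of "\<lambda>i. h (x \<bullet> ico i)"] by simp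
  finally show ?thesis by (simp add: prod_Ico)
qed

lemma Ek1_diff: "Ek 1 a - Ek 1 b = fps_const (a - b) * fps_X * Ek 1 a * Ek 1 b"
proof -
  have e1: "Ek 1 a * Ek 1 b * Lf b = Ek 1 a" using Ek1_L[of b] by (simp add: mult.assoc)
  have e2: "Ek 1 a * Ek 1 b * Lf a = Ek 1 b" using Ek1_L[of a] by (simp add: ac_simps)
  have "Ek 1 a - Ek 1 b = Ek 1 a * Ek 1 b * (Lf b - Lf a)"
    unfolding right_diff_distrib e1 e2 ..
  also have "Lf b - Lf a = (fps_const a - fps_const b) * fps_X"
    unfolding Lf_def by (simp add: algebra_simps)
  also have "fps_const a - fps_const b = fps_const (a - b)" by simp
  finally show ?thesis by (simp add: ac_simps)
qed



lemma dunkl_dir_split: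
  "dunkl_dir k u f x = (\<Sum>i\<in>UNIV. u $ i * partial i f x)
     + k * (\<Sum>v\<in>Rplus. (f x - f (refl v x)) / (x \<bullet> v) * (u \<bullet> v))"
proof -
  have "(\<Sum>i\<in>UNIV. u $ i * (k * (\<Sum>v\<in>Rplus. (f x - f (refl v x)) / (x \<bullet> v) * v $ i)))
     = k * (\<Sum>v\<in>Rplus. (f x - f (refl v x)) / (x \<bullet> v) * (\<Sum>i\<in>UNIV. u $ i * v $ i))"
    apply (simp add: sum_distrib_left sum_distrib_right sum_divide_distrib mult_ac)
    apply (rule sum.swap)
    done
  thus ?thesis
    by (simp add: dunkl_dir_def dunkl_def distrib_left sum.distrib inner_vec_def)
qed

lemma sum_axis: "(\<Sum>i\<in>UNIV. (u::real^'n) $ i * (axis i 1 \<bullet> y)) = u \<bullet> y"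
  by (simp only: inner_axis') (simp add: inner_vec_def)

lemma core:
  fixes k :: real and u x :: "real^3" and i0 m :: nat
  assumes i0: "i0 < 12" and xv: "\<forall>v\<in>Rplus. x \<bullet> v \<noteq> 0"
  shows "dunkl_dir k u (q k (Suc m) (ico i0)) x
     = (u \<bullet> ico i0) * (real m + 1 + 12 * k - k * (1 + (-1) ^ m)) * q k m (ico i0) x"
proof -
  define y0 where "y0 = ico i0"
  define n0 where "n0 = negL ! i0"
  have n0: "n0 < 12" "n0 \<noteq> i0" "ico n0 = - y0"
    using negL_bound[OF i0] negL_ico[OF i0] by (simp_all add: n0_def y0_def)
  define Pf where "Pf z = (\<Prod>y\<in>Ico. Ek k (z \<bullet> y))" for z
  define a where "a = x \<bullet> y0"
  define Q where "Q = Ek 1 a * Pf x"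
  define H where "H y = fps_nth (Q * Ek 1 (x \<bullet> y)) m" for y
  define Fm where "Fm = fps_nth Q m"
  have FFeq: "FF k y0 z = Ek 1 (z \<bullet> y0) * Pf z" for z
    by (simp add: FF_def Pf_def)
  have QFF: "Q = FF k y0 x" by (simp add: FFeq Q_def a_def)
  have qeq: "q k n y0 = (\<lambda>z. fps_nth (FF k y0 z) n)" for n by (rule q_eq)
  define DF where "DF w = fps_const (1 * (w \<bullet> y0)) * fps_X * Ek (1 + 1) a * Pf x
     + Ek 1 a * (\<Sum>y\<in>Ico. fps_const (k * (w \<bullet> y)) * fps_X * Ek (k + 1) (x \<bullet> y)
         * (\<Prod>y'\<in>Ico - {y}. Ek k (x \<bullet> y')))" for w
  have hD: "hasD (FF k y0) (DF w) x w" for w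
  proof -
    have "hasD (\<lambda>z. Ek 1 (z \<bullet> y0) * (\<Prod>y\<in>Ico. Ek k (z \<bullet> y))) (DF w) x w"
      unfolding DF_def Pf_def a_def
      by (rule hasD_mult[OF hasD_Ek hasD_prod[OF finite_Ico hasD_Ek]])
    thus ?thesis by (simp add: FF_def[abs_def])
  qed
  have DF2: "DF w = fps_const (w \<bullet> y0) * (fps_X * (Q * Ek 1 a))
      + (\<Sum>y\<in>Ico. fps_const (k * (w \<bullet> y)) * (fps_X * (Q * Ek 1 (x \<bullet> y))))" for w
  proof -
    have t: "fps_const (k * (w \<bullet> y)) * fps_X * Ek (k + 1) (x \<bullet> y) * (\<Prod>y'\<in>Ico - {y}. Ek k (x \<bullet> y'))
        = fps_const (k * (w \<bullet> y)) * fps_X * Ek 1 (x \<bullet> y) * Pf x" if "y \<in> Ico" for y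
    proof -
      have "Pf x = Ek k (x \<bullet> y) * (\<Prod>y'\<in>Ico - {y}. Ek k (x \<bullet> y'))"
        unfolding Pf_def by (rule prod.remove[OF finite_Ico that])
      thus ?thesis unfolding Ek_succ by (simp add: ac_simps)
    qed
    have "DF w = fps_const (w \<bullet> y0) * fps_X * (Ek 1 a * Ek 1 a) * Pf x
        + Ek 1 a * (\<Sum>y\<in>Ico. fps_const (k * (w \<bullet> y)) * fps_X * Ek 1 (x \<bullet> y) * Pf x)"
    proof -
      have s: "(\<Sum>y\<in>Ico. fps_const (k * (w \<bullet> y)) * fps_X * Ek (k + 1) (x \<bullet> y) * (\<Prod>y'\<in>Ico - {y}. Ek k (x \<bullet> y')))
        = (\<Sum>y\<in>Ico. fps_const (k * (w \<bullet> y)) * fps_X * Ek 1 (x \<bullet> y) * Pf x)"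
        by (rule sum.cong[OF refl t])
      show ?thesis unfolding DF_def s Ek_succ[of 1] by (simp add: ac_simps)
    qed
    also have "\<dots> = fps_const (w \<bullet> y0) * (fps_X * (Q * Ek 1 a))
      + (\<Sum>y\<in>Ico. fps_const (k * (w \<bullet> y)) * (fps_X * (Q * Ek 1 (x \<bullet> y))))"
      unfolding Q_def sum_distrib_left by (simp add: ac_simps)
    finally show ?thesis .
  qed
  have DFnth: "fps_nth (DF w) (Suc m) = (w \<bullet> y0) * H y0 + (\<Sum>y\<in>Ico. k * (w \<bullet> y) * H y)" for w
    by (simp add: DF2 fps_sum_nth H_def a_def)
  have part: "partial i (q k (Suc m) y0) x = fps_nth (DF (axis i 1)) (Suc m)" for i
    unfolding partial_def qeq
    by (rule DERIV_imp_deriv) (use hD[of "axis i 1"] in \<open>simp add: hasD_def\<close>)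
  have S5: "(\<Sum>i\<in>UNIV. u $ i * partial i (q k (Suc m) y0) x)
      = (u \<bullet> y0) * H y0 + (\<Sum>y\<in>Ico. k * (u \<bullet> y) * H y)"
  proof -
    have "(\<Sum>i\<in>UNIV. u $ i * partial i (q k (Suc m) y0) x)
        = (\<Sum>i\<in>UNIV. u $ i * (axis i 1 \<bullet> y0) * H y0
            + (\<Sum>y\<in>Ico. k * H y * (u $ i * (axis i 1 \<bullet> y))))"
      by (simp add: part DFnth distrib_left sum_distrib_left mult_ac)
    also have "\<dots> = (\<Sum>i\<in>UNIV. u $ i * (axis i 1 \<bullet> y0)) * H y0
        + (\<Sum>y\<in>Ico. \<Sum>i\<in>UNIV. k * H y * (u $ i * (axis i 1 \<bullet> y)))"
      by (simp add: sum.distrib sum_distrib_right sum.swap[of _ UNIV Ico])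
    also have "\<dots> = (u \<bullet> y0) * H y0 + (\<Sum>y\<in>Ico. k * (u \<bullet> y) * H y)"
      by (simp add: sum_distrib_left[symmetric] sum_axis mult_ac)
    finally show ?thesis .
  qed
  have S6: "(q k (Suc m) y0 x - q k (Suc m) y0 (refl (rp j) x)) / (x \<bullet> rp j) * (u \<bullet> rp j)
      = (u \<bullet> (y0 - ico (Tt ! j ! i0))) * H (ico (Tt ! j ! i0))" if j: "j < 15" for j
  proof -
    define v where "v = rp j"
    define b where "b = x \<bullet> ico (Tt ! j ! i0)"
    have vR: "v \<in> Rplus" using j by (simp add: Rplus_img v_def)
    have xv0: "x \<bullet> v \<noteq> 0" using xv vR by blast
    have rv: "refl v y0 = ico (Tt ! j ! i0)" using tab[OF j i0] by (simp add: v_def y0_def)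
    have rdiff: "y0 - refl v y0 = ((y0 \<bullet> v) / 2) *\<^sub>R v"
      using refl_rp[OF j, of y0] by (simp add: v_def)
    have Ps: "Pf (refl v x) = Pf x"
      unfolding Pf_def v_def using prod_refl_inv[OF j, of "Ek k" x] .
    have FFs: "FF k y0 (refl v x) = Ek 1 b * Pf x"
      unfolding FFeq Ps by (simp add: refl_inner rv b_def)
    have ab: "a - b = (y0 \<bullet> v) / 2 * (x \<bullet> v)"
    proof -
      have "a - b = x \<bullet> (y0 - refl v y0)" by (simp add: a_def b_def rv inner_diff_right)
      also have "\<dots> = (y0 \<bullet> v) / 2 * (x \<bullet> v)" by (simp add: rdiff)
      finally show ?thesis .
    qed
    have "q k (Suc m) y0 x - q k (Suc m) y0 (refl v x)
        = fps_nth ((Ek 1 a - Ek 1 b) * Pf x) (Suc m)"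
      by (simp add: qeq FFs QFF[symmetric] Q_def algebra_simps)
    also have "(Ek 1 a - Ek 1 b) * Pf x = fps_const (a - b) * (fps_X * (Q * Ek 1 b))"
      unfolding Ek1_diff Q_def by (simp add: ac_simps)
    also have "fps_nth \<dots> (Suc m) = (a - b) * H (ico (Tt ! j ! i0))"
      by (simp add: H_def b_def)
    finally have num: "q k (Suc m) y0 x - q k (Suc m) y0 (refl v x) = (a - b) * H (ico (Tt ! j ! i0))" .
    have uu: "u \<bullet> (y0 - ico (Tt ! j ! i0)) = (y0 \<bullet> v) / 2 * (u \<bullet> v)"
      by (simp add: rv[symmetric] rdiff)
    show ?thesis unfolding v_def[symmetric] num ab uu using xv0 by (simp add: field_simps)
  qed
  have S8: "(\<Sum>v\<in>Rplus. (q k (Suc m) y0 x - q k (Suc m) y0 (refl v x)) / (x \<bullet> v) * (u \<bullet> v))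
      = (\<Sum>i<12. if i = i0 \<or> i = n0 then 0 else (u \<bullet> (y0 - ico i)) * H (ico i))"
  proof -
    have "(\<Sum>v\<in>Rplus. (q k (Suc m) y0 x - q k (Suc m) y0 (refl v x)) / (x \<bullet> v) * (u \<bullet> v))
       = (\<Sum>j<15. (\<lambda>i. (u \<bullet> (y0 - ico i)) * H (ico i)) (Tt ! j ! i0))"
      unfolding sum_Rplus by (intro sum.cong refl) (simp only: lessThan_iff S6)
    also have "\<dots> = (\<Sum>i<12. if i = i0 \<or> i = n0 then 0 else (u \<bullet> (y0 - ico i)) * H (ico i))"
      unfolding n0_def by (rule orbit_idx[OF i0]) (simp add: y0_def)
    finally show ?thesis .
  qed
  have S9: "real m * Fm = fps_nth (DF x) m"
  proof -
    have d1: "((\<lambda>t. fps_nth (FF k y0 (x + t *\<^sub>R x)) m) has_field_derivative fps_nth (DF x) m) (at 0)"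
      using hD[of x] by (simp add: hasD_def)
    have e: "fps_nth (FF k y0 (x + t *\<^sub>R x)) m = (1 + t) ^ m * Fm" for t
    proof -
      have "x + t *\<^sub>R x = (1 + t) *\<^sub>R x" by (simp add: algebra_simps)
      thus ?thesis by (simp add: FF_scale Sc_nth Fm_def QFF)
    qed
    have d2: "((\<lambda>t. (1 + t) ^ m * Fm) has_field_derivative real m * Fm) (at 0)"
      by (auto intro!: derivative_eq_intros)
    show ?thesis using DERIV_unique[OF d2] d1 unfolding e by simp
  qed
  have S10: "fps_nth (DF x) m = H y0 + k * (\<Sum>y\<in>Ico. H y) - (1 + 12 * k) * Fm"
  proof -
    have r: "fps_const c * (fps_X * (Q * Ek 1 c)) = Q * Ek 1 c - Q" for c
    proof -
      have "fps_const c * (fps_X * (Q * Ek 1 c)) = Q * (fps_const c * fps_X * Ek 1 c)"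
        by (simp add: ac_simps)
      also have "\<dots> = Q * Ek 1 c - Q" unfolding XEk1 by (simp add: algebra_simps)
      finally show ?thesis .
    qed
    have r2: "fps_const (k * c) * (fps_X * (Q * Ek 1 c)) = fps_const k * (Q * Ek 1 c - Q)" for c
      unfolding r[symmetric] by (simp add: fps_const_mult[symmetric] ac_simps del: fps_const_mult)
    have "DF x = (Q * Ek 1 a - Q) + (\<Sum>y\<in>Ico. fps_const k * (Q * Ek 1 (x \<bullet> y) - Q))"
      unfolding DF2 r2 by (simp add: r a_def)
    hence "fps_nth (DF x) m = H y0 - Fm + (\<Sum>y\<in>Ico. k * (H y - Fm))"
      by (simp add: fps_sum_nth H_def Fm_def a_def)
    also have "\<dots> = H y0 + k * (\<Sum>y\<in>Ico. H y) - (1 + 12 * k) * Fm"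
      by (simp add: sum_subtractf sum_distrib_left[symmetric] card_Ico algebra_simps)
    finally show ?thesis .
  qed
  have S11: "2 * H (ico n0) = (1 + (-1) ^ m) * Fm"
  proof -
    have Pn: "Pf (- x) = Pf x" unfolding Pf_def by (rule prod_neg_inv)
    have FFn: "FF k y0 ((-1) *\<^sub>R x) = Ek 1 (- a) * Pf x"
      by (simp add: FFeq Pn a_def)
    have sc: "fps_nth (FF k y0 ((-1) *\<^sub>R x)) m = (-1) ^ m * Fm"
      by (simp only: FF_scale Sc_nth Fm_def QFF)
    have par: "fps_nth (Ek 1 (- a) * Pf x) m = (-1) ^ m * Fm"
      using sc unfolding FFn .
    have pm: "Ek 1 a * Ek 1 (-a) + Ek 1 a * Ek 1 (-a) = Ek 1 a + Ek 1 (-a)"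
      using Ek1_pm[of a] by (simp only: mult_2)
    have "Q * Ek 1 (- a) + Q * Ek 1 (- a) = Pf x * (Ek 1 a * Ek 1 (-a) + Ek 1 a * Ek 1 (-a))"
      by (simp add: Q_def algebra_simps)
    also have "\<dots> = Q + Ek 1 (- a) * Pf x" unfolding pm by (simp add: Q_def algebra_simps)
    finally have "fps_nth (Q * Ek 1 (- a) + Q * Ek 1 (- a)) m = fps_nth (Q + Ek 1 (- a) * Pf x) m"
      by simp
    hence "H (ico n0) + H (ico n0) = Fm + (-1) ^ m * Fm"
      using par by (simp add: H_def n0 a_def Fm_def)
    thus ?thesis by (simp add: algebra_simps)
  qed
  have S12: "(\<Sum>i<12. if i = i0 \<or> i = n0 then 0 else (u \<bullet> (y0 - ico i)) * H (ico i))
      = (u \<bullet> y0) * (\<Sum>i<12. H (ico i)) - (\<Sum>i<12. (u \<bullet> ico i) * H (ico i)) - 2 * (u \<bullet> y0) * H (ico n0)"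
  proof -
    define f where "f i = (u \<bullet> (y0 - ico i)) * H (ico i)" for i
    have "(\<Sum>i<12. f i) = (\<Sum>i<12. (if i = i0 then f i else 0) + (if i = n0 then f i else 0)
        + (if i = i0 \<or> i = n0 then 0 else f i))"
      by (rule sum.cong) (use n0 in auto)
    also have "\<dots> = f i0 + f n0 + (\<Sum>i<12. if i = i0 \<or> i = n0 then 0 else f i)"
      using i0 n0 by (simp add: sum.distrib)
    finally have "(\<Sum>i<12. if i = i0 \<or> i = n0 then 0 else f i) = (\<Sum>i<12. f i) - f i0 - f n0"
      by simp
    also have "f i0 = 0" by (simp add: f_def y0_def)
    also have "f n0 = 2 * (u \<bullet> y0) * H (ico n0)"
    proof -
      have "y0 - ico n0 = y0 + y0" by (simp add: n0)
      thus ?thesis by (simp only: f_def inner_add_right) simp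
    qed
    also have "(\<Sum>i<12. f i) = (u \<bullet> y0) * (\<Sum>i<12. H (ico i)) - (\<Sum>i<12. (u \<bullet> ico i) * H (ico i))"
      by (simp add: f_def inner_diff_right left_diff_distrib sum_subtractf sum_distrib_left)
    finally show ?thesis unfolding f_def by simp
  qed
  have "dunkl_dir k u (q k (Suc m) y0) x
     = (u \<bullet> y0) * (H y0 + k * (\<Sum>y\<in>Ico. H y) - 2 * k * H (ico n0))"
    unfolding dunkl_dir_split S5 S8 S12 by (simp add: sum_Ico algebra_simps sum_distrib_left)
  also have "\<dots> = (u \<bullet> y0) * (real m + 1 + 12 * k - k * (1 + (-1) ^ m)) * Fm"
  proof -
    have e1: "H y0 + k * (\<Sum>y\<in>Ico. H y) = (real m + 1 + 12 * k) * Fm"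
      using S9 S10 by (simp add: algebra_simps)
    have e2: "2 * k * H (ico n0) = k * ((1 + (-1) ^ m) * Fm)"
      using S11 by (metis mult.assoc mult.commute)
    show ?thesis unfolding e1 e2 by (simp add: algebra_simps)
  qed
  finally show ?thesis by (simp add: y0_def Fm_def QFF q_eq)
qed

theorem mainTheorem2:
  fixes k :: real and y0 u x :: "real^3"
  assumes "k \<ge> 0" and "y0 \<in> Ico"
    and "\<forall>v\<in>Rplus. x \<bullet> v \<noteq> 0"
  shows "(\<forall>n::nat. n \<ge> 1 \<longrightarrow>
            dunkl_dir k u (q k (2*n) y0) x
              = 2 * (u \<bullet> y0) * (6*k + real n) * q k (2*n - 1) y0 x)
       \<and> (\<forall>n::nat.
            dunkl_dir k u (q k (2*n+1) y0) x
              = (u \<bullet> y0) * (10*k + 2 * real n + 1) * q k (2*n) y0 x)"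
proof -
  obtain i0 where i0: "i0 < 12" and y0: "y0 = ico i0"
    using assms(2) by (auto simp: Ico_img)
  note c = core[OF i0 assms(3)]
  show ?thesis
  proof (intro conjI allI impI)
    fix n :: nat assume n: "n \<ge> 1"
    then obtain m where m: "2 * n = Suc (2 * n - 1)" "2 * n - 1 = 2 * (n - 1) + 1" by (intro that) auto
    have "dunkl_dir k u (q k (2*n) y0) x
        = (u \<bullet> y0) * (real (2 * n - 1) + 1 + 12 * k - k * (1 + (-1) ^ (2 * n - 1))) * q k (2 * n - 1) y0 x"
      unfolding y0 by (subst m(1)) (rule c)
    also have "(-1::real) ^ (2 * n - 1) = -1" unfolding m(2) by simp
    also have "real (2 * n - 1) = 2 * real n - 1" using n by (simp add: of_nat_diff)
    finally show "dunkl_dir k u (q k (2*n) y0) x = 2 * (u \<bullet> y0) * (6*k + real n) * q k (2*n - 1) y0 x"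
      by (simp add: algebra_simps)
  next
    fix n :: nat
    have "dunkl_dir k u (q k (2*n+1) y0) x
        = (u \<bullet> y0) * (real (2 * n) + 1 + 12 * k - k * (1 + (-1) ^ (2 * n))) * q k (2 * n) y0 x"
      unfolding y0 using c[where m="2 * n"] by simp
    thus "dunkl_dir k u (q k (2*n+1) y0) x = (u \<bullet> y0) * (10*k + 2 * real n + 1) * q k (2*n) y0 x"
      by (simp add: algebra_simps)
  qed
qed

end
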